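(* Let $n,m,l$ be positive integers, $f:\mathbb{R}^n\times\mathbb{R}^m\to\mathbb{R}^n$, $g:\mathbb{R}^n\times\mathbb{R}^m\to\mathbb{R}^{n\times l}$ smooth with $f(0,0)=0$, $g(0,0)=0$, and consider $\dot x=f(x,u)+g(x,u)\theta$ with constant unknown $\theta\in\mathbb{R}^l$. Let $k:\mathbb{R}^l\times\mathbb{R}^n\to\mathbb{R}^m$ be smooth with $k(\vartheta,0)=0$, and $V_\vartheta,Q_\vartheta:\mathbb{R}^n\to\mathbb{R}_+$ continuous, positive definite, radially unbounded, with $(\vartheta,x)\mapsto V_\vartheta(x),Q_\vartheta(x)$ continuous, such that: (H1) for each $\vartheta$, the origin is globally asymptotically stable for $\dot x=f(x,k(\vartheta,x))+g(x,k(\vartheta,x))\vartheta$ and every solution satisfies $V_\vartheta(x(t))\le Q_\vartheta(x(0))$ for $t\ge0$; (H2) for every nonempty compact $\Theta\subset\mathbb{R}^l$ and $M\ge0$ there is $R>0$ with $V_\vartheta(x)\le M,\ \vartheta\in\Theta\Rightarrow|x|\le R$; (H3) there is a positive integer $N$ such that: if there exist $0=\tau_0<\dots<\tau_N$, $\theta,d_0,\dots,d_N\in\mathbb{R}^l$ with all $d_i\ne0$, and a right differentiable $x\in C^0([0,\tau_N];\mathbb{R}^n)\cap C^1([0,\tau_N]\setminus\{\tau_0,\dots,\tau_N\};\mathbb{R}^n)$ with $\dot x(t)=f(x(t),k(\theta+d_i,x(t)))+g(x(t),k(\theta+d_i,x(t)))\theta$ on $[\tau_i,\tau_{i+1})$,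 $i=0,\dots,N-1$, and $g(x(t),k(\theta+d_j,x(t)))d_{i+1}=0$ for $t\in[\tau_j,\tau_{j+1}]$, $i=0,\dots,N-1$, $j=0,\dots,i$, then $x\equiv0$ on $[0,\tau_N]$. Suppose moreover that for each $\vartheta\in\mathbb{R}^l$ there are constants $M_\vartheta,\omega_\vartheta,R_\vartheta>0$ such that every solution of $\dot x=f(x,k(\vartheta,x))+g(x,k(\vartheta,x))\vartheta$ with $|x(0)|\le R_\vartheta$ satisfies $|x(t)|\le M_\vartheta e^{-\omega_\vartheta t}|x(0)|$ for all $t\ge0$, and that for every nonempty compact $\Theta\subset\mathbb{R}^l$ there exist $R>0$, $K_2>K_1>0$ with $K_1|x|^2\le V_\vartheta(x)\le Q_\vartheta(x)\le K_2|x|^2$ for all $\vartheta\in\Theta$ and $|x|\le R$. Let $T>0$, let $a:\mathbb{R}^n\to\mathbb{R}_+$ be continuous, positive definite with $\sup\{|x|^{-2}a(x):x\ne0,|x|\le\delta\}<+\infty$ for some $\delta>0$, and let $\tilde N>N$ be an integer. Then there exist constants $\tilde M_{\theta,\hat\theta},\tilde R_{\theta,\hat\theta}>0$, $(\theta,\hat\theta)\in\mathbb{R}^l\times\mathbb{R}^l$, such that for every $\theta,\hat\theta_0\in\mathbb{R}^l$ and $x_0\in\mathbb{R}^n$ with $|x_0|\le\tilde R_{\theta,\hat\theta_0}$, the solution of the hybrid closed-loop system (see context) with $x(0)=x_0$, $\hat\theta(0)=\hat\theta_0$ satisfies $|x(t)|\le\tilde M_{\theta,\hat\theta_0}e^{-\omega_\theta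 t}|x_0|$ for all $t\ge0$.
   Context: Hybrid closed-loop system: event times $\tau_0=0$, $\tau_{i+1}=\min(\tau_i+T,r_i)$. On $[\tau_i,\tau_{i+1})$: $u(t)=k(\hat\theta(\tau_i),x(t))$, $\hat\theta(t)=\hat\theta(\tau_i)$, $x$ continuous solving $\dot x=f(x,u)+g(x,u)\theta$. Trigger: for $x(\tau_i)\ne0$, $r_i=\inf\{t>\tau_i:V_{\hat\theta(\tau_i)}(x(t))=Q_{\hat\theta(\tau_i)}(x(\tau_i))+a(x(\tau_i))\}$ ($\inf\emptyset=+\infty$); for $x(\tau_i)=0$, $r_i=\tau_i+T$. With $p(t,\sigma)=x(t)-x(\sigma)-\int_\sigma^tf(x(s),u(s))ds$, $q(t,\sigma)=\int_\sigma^tg(x(s),u(s))ds$, $\mu_{i+1}=\min\{\tau_j:j\in\{0,\dots,i\},\tau_j\ge\tau_{i+1}-\tilde NT\}$, $G=\iint_{[\mu_{i+1},\tau_{i+1}]^2}q'(t,\sigma)q(t,\sigma)d\sigma dt$, $Z=\iint_{[\mu_{i+1},\tau_{i+1}]^2}q'(t,\sigma)p(t,\sigma)d\sigma dt$, the update is $\hat\theta(\tau_{i+1})=\arg\min\{|\vartheta-\hat\theta(\tau_i)|^2:\vartheta\in\mathbb{R}^l,\ Z=G\vartheta\}$. Positive definite: $V(0)=0$, $V(x)>0$ for $x\ne0$; radially unbounded: sublevel sets compact. *)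

theory Defs
  imports "HOL-Analysis.Analysis"
begin

text \<open>C-infinity: continuous partial derivatives of every order exist
  (D js is the iterated partial derivative along the basis directions in js).\<close>
definition smooth_fun :: "('a::euclidean_space \<Rightarrow> 'b::real_normed_vector) \<Rightarrow> bool" where
  "smooth_fun h \<longleftrightarrow> (\<exists>D :: 'a list \<Rightarrow> 'a \<Rightarrow> 'b. D [] = h \<and>
     (\<forall>js. set js \<subseteq> Basis \<longrightarrow> continuous_on UNIV (D js) \<and>
        (\<forall>j\<in>Basis. \<forall>y. ((\<lambda>s. D js (y + s *\<^sub>R j)) has_vector_derivative D (j # js) y) (at 0))))"

definition pos_def :: "('a::real_normed_vector \<Rightarrow> real) \<Rightarrow> bool" where
  "pos_def V \<longleftrightarrow> V 0 = 0 \<and> (\<forall>x. x \<noteq> 0 \<longrightarrow> V x > 0)"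

definition radially_unbounded :: "('a::real_normed_vector \<Rightarrow> real) \<Rightarrow> bool" where
  "radially_unbounded V \<longleftrightarrow> (\<forall>c. compact {x. V x \<le> c})"

definition ode_sol :: "('a::real_normed_vector \<Rightarrow> 'a) \<Rightarrow> (real \<Rightarrow> 'a) \<Rightarrow> bool" where
  "ode_sol F x \<longleftrightarrow> (\<forall>t\<ge>0. (x has_vector_derivative F (x t)) (at t within {0..}))"

definition GAS :: "('a::real_normed_vector \<Rightarrow> 'a) \<Rightarrow> bool" where
  "GAS F \<longleftrightarrow> (\<forall>x0. \<exists>x. ode_sol F x \<and> x 0 = x0) \<and>
     (\<forall>\<epsilon>>0. \<exists>\<delta>>0. \<forall>x. ode_sol F x \<and> norm (x 0) < \<delta> \<longrightarrow> (\<forall>t\<ge>0. norm (x t) < \<epsilon>)) \<and>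
     (\<forall>x. ode_sol F x \<longrightarrow> (x \<longlongrightarrow> 0) at_top)"

definition oint :: "real \<Rightarrow> real \<Rightarrow> (real \<Rightarrow> 'b::real_normed_vector) \<Rightarrow> 'b" where
  "oint a b h = (if a \<le> b then integral {a..b} h else - integral {b..a} h)"

definition hybrid_sol ::
  "(real^'n \<Rightarrow> real^'m \<Rightarrow> real^'n) \<Rightarrow> (real^'n \<Rightarrow> real^'m \<Rightarrow> real^'l^'n) \<Rightarrow>
   (real^'l \<Rightarrow> real^'n \<Rightarrow> real^'m) \<Rightarrow> (real^'l \<Rightarrow> real^'n \<Rightarrow> real) \<Rightarrow>
   (real^'l \<Rightarrow> real^'n \<Rightarrow> real) \<Rightarrow> (real^'n \<Rightarrow> real) \<Rightarrow> real \<Rightarrow> nat \<Rightarrow>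
   real^'l \<Rightarrow> real^'n \<Rightarrow> real^'l \<Rightarrow>
   (real \<Rightarrow> real^'n) \<Rightarrow> (real \<Rightarrow> real^'l) \<Rightarrow> (nat \<Rightarrow> real) \<Rightarrow> bool" where
  "hybrid_sol f g k V Q a T Nt \<theta> x0 \<theta>h0 x \<theta>h \<tau> \<longleftrightarrow>
     \<tau> 0 = 0 \<and> (\<forall>t. \<exists>i. t < \<tau> i) \<and>
     x 0 = x0 \<and> \<theta>h 0 = \<theta>h0 \<and> continuous_on {0..} x \<and>
     (\<forall>i. \<tau> i < \<tau> (Suc i)) \<and>
     (\<forall>i. ereal (\<tau> (Suc i)) = min (ereal (\<tau> i + T))
          (if x (\<tau> i) = 0 then ereal (\<tau> i + T)
           else Inf (ereal ` {t. t > \<tau> i \<and> V (\<theta>h (\<tau> i)) (x t) = Q (\<theta>h (\<tau> i)) (x (\<tau> i)) + a (x (\<tau> i))}))) \<and>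
     (\<forall>i. \<forall>t\<in>{\<tau> i..<\<tau> (Suc i)}. \<theta>h t = \<theta>h (\<tau> i) \<and>
          (x has_vector_derivative
             (f (x t) (k (\<theta>h (\<tau> i)) (x t)) + g (x t) (k (\<theta>h (\<tau> i)) (x t)) *v \<theta>))
             (at t within {\<tau> i..<\<tau> (Suc i)})) \<and>
     (\<forall>i. let u = (\<lambda>s. k (\<theta>h s) (x s));
            p = (\<lambda>t \<sigma>. x t - x \<sigma> - oint \<sigma> t (\<lambda>s. f (x s) (u s)));
            q = (\<lambda>t \<sigma>. oint \<sigma> t (\<lambda>s. g (x s) (u s)));
            \<mu> = Min {\<tau> j | j. j \<le> i \<and> \<tau> j \<ge> \<tau> (Suc i) - real Nt * T};
            G = integral ({\<mu>..\<tau> (Suc i)} \<times> {\<mu>..\<tau> (Suc i)})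
                  (\<lambda>(t, \<sigma>). transpose (q t \<sigma>) ** q t \<sigma>);
            Z = integral ({\<mu>..\<tau> (Suc i)} \<times> {\<mu>..\<tau> (Suc i)})
                  (\<lambda>(t, \<sigma>). transpose (q t \<sigma>) *v p t \<sigma>)
        in is_arg_min (\<lambda>\<phi>. (norm (\<phi> - \<theta>h (\<tau> i)))\<^sup>2) (\<lambda>\<phi>. Z = G *v \<phi>) (\<theta>h (\<tau> (Suc i))))"

end

theory Submission
  imports Defs
begin


lemma bl_mv: "bounded_linear (\<lambda>M::real^'l^'n. M *v v)"
  unfolding linear_conv_bounded_linear[symmetric]
  by (rule linearI) (auto simp: matrix_vector_mult_def vec_eq_iff sum.distrib sum_distrib_left algebra_simps)

lemma mv_neg: "(- M) *v v = - (M *v (v::real^'l)) " for M :: "real^'l^'n"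
  by (simp add: matrix_vector_mult_def vec_eq_iff sum_negf)

locale hyb =
  fixes f :: "real^'n \<Rightarrow> real^'m \<Rightarrow> real^'n" and g :: "real^'n \<Rightarrow> real^'m \<Rightarrow> real^'l^'n"
    and k :: "real^'l \<Rightarrow> real^'n \<Rightarrow> real^'m" and V Q :: "real^'l \<Rightarrow> real^'n \<Rightarrow> real"
    and a :: "real^'n \<Rightarrow> real" and T :: real and Nt :: nat and \<theta> :: "real^'l"
    and x0 :: "real^'n" and \<theta>h0 :: "real^'l"
    and x :: "real \<Rightarrow> real^'n" and \<theta>h :: "real \<Rightarrow> real^'l" and \<tau> :: "nat \<Rightarrow> real"
  assumes hs: "hybrid_sol f g k V Q a T Nt \<theta> x0 \<theta>h0 x \<theta>h \<tau>"
    and fc: "continuous_on UNIV (\<lambda>(x, u). f x u)"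
    and gc: "continuous_on UNIV (\<lambda>(x, u). g x u)"
    and kc: "continuous_on UNIV (\<lambda>(\<phi>, x). k \<phi> x)"
    and Tpos: "T > 0" and Nt1: "Nt \<ge> 1"
begin

lemma hs': "\<tau> 0 = 0 \<and> (\<forall>t. \<exists>i. t < \<tau> i) \<and>
     x 0 = x0 \<and> \<theta>h 0 = \<theta>h0 \<and> continuous_on {0..} x \<and>
     (\<forall>i. \<tau> i < \<tau> (Suc i)) \<and>
     (\<forall>i. ereal (\<tau> (Suc i)) = min (ereal (\<tau> i + T))
          (if x (\<tau> i) = 0 then ereal (\<tau> i + T)
           else Inf (ereal ` {t. t > \<tau> i \<and> V (\<theta>h (\<tau> i)) (x t) = Q (\<theta>h (\<tau> i)) (x (\<tau> i)) + a (x (\<tau> i))}))) \<and>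
     (\<forall>i. \<forall>t\<in>{\<tau> i..<\<tau> (Suc i)}. \<theta>h t = \<theta>h (\<tau> i) \<and>
          (x has_vector_derivative
             (f (x t) (k (\<theta>h (\<tau> i)) (x t)) + g (x t) (k (\<theta>h (\<tau> i)) (x t)) *v \<theta>))
             (at t within {\<tau> i..<\<tau> (Suc i)})) \<and>
     (\<forall>i. let u = (\<lambda>s. k (\<theta>h s) (x s));
            p = (\<lambda>t \<sigma>. x t - x \<sigma> - oint \<sigma> t (\<lambda>s. f (x s) (u s)));
            q = (\<lambda>t \<sigma>. oint \<sigma> t (\<lambda>s. g (x s) (u s)));
            \<mu> = Min {\<tau> j | j. j \<le> i \<and> \<tau> j \<ge> \<tau> (Suc i) - real Nt * T};
            G = integral ({\<mu>..\<tau> (Suc i)} \<times> {\<mu>..\<tau> (Suc i)})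
                  (\<lambda>(t, \<sigma>). transpose (q t \<sigma>) ** q t \<sigma>);
            Z = integral ({\<mu>..\<tau> (Suc i)} \<times> {\<mu>..\<tau> (Suc i)})
                  (\<lambda>(t, \<sigma>). transpose (q t \<sigma>) *v p t \<sigma>)
        in is_arg_min (\<lambda>\<phi>. (norm (\<phi> - \<theta>h (\<tau> i)))\<^sup>2) (\<lambda>\<phi>. Z = G *v \<phi>) (\<theta>h (\<tau> (Suc i))))"
  using hs unfolding hybrid_sol_def .

lemma tau0: "\<tau> 0 = 0" using hs' by (rule conjunct1)
lemma unb: "\<exists>i. t < \<tau> i" using hs'[THEN conjunct2, THEN conjunct1] by blast
lemma x00: "x 0 = x0" using hs'[THEN conjunct2, THEN conjunct2, THEN conjunct1] .
lemma th0: "\<theta>h 0 = \<theta>h0" using hs'[THEN conjunct2, THEN conjunct2, THEN conjunct2, THEN conjunct1] .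
lemma xc: "continuous_on {0..} x" using hs'[THEN conjunct2, THEN conjunct2, THEN conjunct2, THEN conjunct2, THEN conjunct1] .
lemma inc: "\<tau> i < \<tau> (Suc i)" using hs'[THEN conjunct2, THEN conjunct2, THEN conjunct2, THEN conjunct2, THEN conjunct2, THEN conjunct1] by blast
lemma trig: "ereal (\<tau> (Suc i)) = min (ereal (\<tau> i + T))
          (if x (\<tau> i) = 0 then ereal (\<tau> i + T)
           else Inf (ereal ` {t. t > \<tau> i \<and> V (\<theta>h (\<tau> i)) (x t) = Q (\<theta>h (\<tau> i)) (x (\<tau> i)) + a (x (\<tau> i))}))"
  using hs'[THEN conjunct2, THEN conjunct2, THEN conjunct2, THEN conjunct2, THEN conjunct2, THEN conjunct2, THEN conjunct1] by (rule spec)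
lemma dyn0: "\<forall>t\<in>{\<tau> i..<\<tau> (Suc i)}. \<theta>h t = \<theta>h (\<tau> i) \<and>
          (x has_vector_derivative
             (f (x t) (k (\<theta>h (\<tau> i)) (x t)) + g (x t) (k (\<theta>h (\<tau> i)) (x t)) *v \<theta>))
             (at t within {\<tau> i..<\<tau> (Suc i)})"
  using hs'[THEN conjunct2, THEN conjunct2, THEN conjunct2, THEN conjunct2, THEN conjunct2, THEN conjunct2, THEN conjunct2, THEN conjunct1] by (rule spec)
lemma upd: "let u = (\<lambda>s. k (\<theta>h s) (x s));
            p = (\<lambda>t \<sigma>. x t - x \<sigma> - oint \<sigma> t (\<lambda>s. f (x s) (u s)));
            q = (\<lambda>t \<sigma>. oint \<sigma> t (\<lambda>s. g (x s) (u s)));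
            \<mu> = Min {\<tau> j | j. j \<le> i \<and> \<tau> j \<ge> \<tau> (Suc i) - real Nt * T};
            G = integral ({\<mu>..\<tau> (Suc i)} \<times> {\<mu>..\<tau> (Suc i)})
                  (\<lambda>(t, \<sigma>). transpose (q t \<sigma>) ** q t \<sigma>);
            Z = integral ({\<mu>..\<tau> (Suc i)} \<times> {\<mu>..\<tau> (Suc i)})
                  (\<lambda>(t, \<sigma>). transpose (q t \<sigma>) *v p t \<sigma>)
        in is_arg_min (\<lambda>\<phi>. (norm (\<phi> - \<theta>h (\<tau> i)))\<^sup>2) (\<lambda>\<phi>. Z = G *v \<phi>) (\<theta>h (\<tau> (Suc i)))"
  using hs'[THEN conjunct2, THEN conjunct2, THEN conjunct2, THEN conjunct2, THEN conjunct2, THEN conjunct2, THEN conjunct2, THEN conjunct2] by (rule spec)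

definition F where "F \<phi> y = f y (k \<phi> y) + g y (k \<phi> y) *v \<theta>"

lemma dyn: "t \<in> {\<tau> i..<\<tau> (Suc i)} \<Longrightarrow> \<theta>h t = \<theta>h (\<tau> i)"
  "t \<in> {\<tau> i..<\<tau> (Suc i)} \<Longrightarrow> (x has_vector_derivative F (\<theta>h (\<tau> i)) (x t)) (at t within {\<tau> i..<\<tau> (Suc i)})"
  using dyn0[of i] unfolding F_def by blast+

definition uu where "uu s = k (\<theta>h s) (x s)"
definition ff where "ff s = f (x s) (uu s)"
definition gg where "gg s = g (x s) (uu s)"

lemma smono: "strict_mono \<tau>"
  using inc by (simp add: strict_mono_Suc_iff)

lemma tau_less_iff: "\<tau> i < \<tau> j \<longleftrightarrow> i < j"
  using smono by (simp add: strict_mono_less)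

lemma tau_le_iff: "\<tau> i \<le> \<tau> j \<longleftrightarrow> i \<le> j"
  using smono by (simp add: strict_mono_less_eq)

lemma tau_nonneg: "\<tau> i \<ge> 0"
  using tau_le_iff[of 0 i] tau0 by simp

lemma tau_step: "\<tau> (Suc i) \<le> \<tau> i + T"
proof -
  have "ereal (\<tau> (Suc i)) \<le> ereal (\<tau> i + T)" unfolding trig by (rule min.cobounded1)
  then show ?thesis by simp
qed

lemma tau_bound: "\<tau> i \<le> real i * T"
proof (induction i)
  case 0 then show ?case using tau0 by simp
next
  case (Suc i)
  have "\<tau> (Suc i) \<le> \<tau> i + T" by (rule tau_step)
  also have "\<dots> \<le> real i * T + T" using Suc by simp
  finally show ?case by (simp add: algebra_simps)
qed

lemma idx: assumes "s \<ge> 0" shows "\<exists>i. \<tau> i \<le> s \<and> s < \<tau> (Suc i)"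
proof -
  define j where "j = (LEAST j. s < \<tau> j)"
  have j: "s < \<tau> j" unfolding j_def using unb by (rule LeastI_ex)
  have "j \<noteq> 0"
  proof
    assume "j = 0" with j tau0 assms show False by simp
  qed
  then obtain i where i: "j = Suc i" by (cases j) auto
  have "\<not> s < \<tau> i" unfolding j_def by (rule not_less_Least) (use i j_def in simp)
  then show ?thesis using i j by (intro exI[of _ i]) auto
qed

lemma kc1: "continuous_on S (k \<phi>)"
proof -
  have "continuous_on S (\<lambda>y. (\<lambda>(\<phi>, x). k \<phi> x) (\<phi>, y))"
    by (rule continuous_on_compose2[OF kc]) (auto intro!: continuous_intros)
  then show ?thesis by simp
qed

lemma Wf_cont: "continuous_on S (\<lambda>y. f y (k \<phi> y))"
proof -
  have "continuous_on S (\<lambda>y. (\<lambda>(x, u). f x u) (y, k \<phi> y))"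
    by (rule continuous_on_compose2[OF fc]) (auto intro!: continuous_intros kc1)
  then show ?thesis by simp
qed

lemma Wg_cont: "continuous_on S (\<lambda>y. g y (k \<phi> y))"
proof -
  have "continuous_on S (\<lambda>y. (\<lambda>(x, u). g x u) (y, k \<phi> y))"
    by (rule continuous_on_compose2[OF gc]) (auto intro!: continuous_intros kc1)
  then show ?thesis by simp
qed

lemma F_cont: "continuous_on S (F \<phi>)"
proof -
  have "continuous_on S (\<lambda>y. g y (k \<phi> y) *v \<theta>)"
    by (rule continuous_on_compose2[OF linear_continuous_on[OF bl_mv] Wg_cont]) auto
  then show ?thesis unfolding F_def by (intro continuous_intros Wf_cont)
qed

lemma xc_piece: "continuous_on {\<tau> i..\<tau> j} x"
  by (rule continuous_on_subset[OF xc]) (use tau_nonneg in auto)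

lemma integrable_W:
  fixes W :: "real^'l \<Rightarrow> real^'n \<Rightarrow> 'b::euclidean_space"
  assumes Wc: "\<And>\<phi>. continuous_on UNIV (W \<phi>)" and a0: "0 \<le> a'"
  shows "(\<lambda>s. W (\<theta>h s) (x s)) integrable_on {a'..b}"
proof -
  have piece: "(\<lambda>s. W (\<theta>h s) (x s)) integrable_on {\<tau> j..\<tau> (Suc j)}" for j
  proof (rule integrable_spike_finite[where S="{\<tau> (Suc j)}" and f="\<lambda>s. W (\<theta>h (\<tau> j)) (x s)"])
    show "(\<lambda>s. W (\<theta>h (\<tau> j)) (x s)) integrable_on {\<tau> j..\<tau> (Suc j)}"
      by (rule integrable_continuous_real, rule continuous_on_compose2[OF Wc xc_piece]) auto
    show "W (\<theta>h s) (x s) = W (\<theta>h (\<tau> j)) (x s)" if "s \<in> {\<tau> j..\<tau> (Suc j)} - {\<tau> (Suc j)}" for s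
      using dyn(1)[of s j] that by auto
  qed auto
  have all: "(\<lambda>s. W (\<theta>h s) (x s)) integrable_on {0..\<tau> n}" for n
  proof (induction n)
    case 0 then show ?case using tau0 integrable_on_refl[of _ 0] by simp
  next
    case (Suc n)
    show ?case
      by (rule Henstock_Kurzweil_Integration.integrable_combine[OF _ _ Suc piece[of n]]) (use tau_nonneg inc less_imp_le in auto)
  qed
  obtain J where J: "b < \<tau> J" using unb by blast
  show ?thesis
    by (rule integrable_on_subinterval[OF all[of J]]) (use a0 J in auto)
qed

lemma ff_int: "0 \<le> a' \<Longrightarrow> ff integrable_on {a'..b}"
  unfolding ff_def uu_def by (rule integrable_W[OF Wf_cont])

lemma gg_int: "0 \<le> a' \<Longrightarrow> gg integrable_on {a'..b}"
  unfolding gg_def uu_def by (rule integrable_W[OF Wg_cont])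


lemma deriv_at:
  assumes "s \<ge> 0" "s \<notin> range \<tau>"
  shows "(x has_vector_derivative (ff s + gg s *v \<theta>)) (at s)"
proof -
  obtain i where i: "\<tau> i \<le> s" "s < \<tau> (Suc i)" using idx[OF assms(1)] by blast
  have si: "\<tau> i < s" using i assms(2) by (metis le_less rangeI)
  have "(x has_vector_derivative F (\<theta>h (\<tau> i)) (x s)) (at s within {\<tau> i..<\<tau> (Suc i)})"
    using dyn(2)[of s i] i by auto
  moreover have "at s within {\<tau> i..<\<tau> (Suc i)} = at s"
    by (rule at_within_open_subset[where S="{\<tau> i<..<\<tau> (Suc i)}"]) (use si i in auto)
  moreover have "F (\<theta>h (\<tau> i)) (x s) = ff s + gg s *v \<theta>"
    using dyn(1)[of s i] i unfolding F_def ff_def gg_def uu_def by simp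
  ultimately show ?thesis by simp
qed

lemma int_rep:
  assumes "0 \<le> a'" "a' \<le> b"
  shows "((\<lambda>s. ff s + gg s *v \<theta>) has_integral (x b - x a')) {a'..b}"
proof -
  obtain J where J: "b < \<tau> J" using unb by blast
  show ?thesis
  proof (rule fundamental_theorem_of_calculus_interior_strong[where S="\<tau> ` {..<J}"])
    show "continuous_on {a'..b} x" by (rule continuous_on_subset[OF xc]) (use assms in auto)
    show "(x has_vector_derivative ff s + gg s *v \<theta>) (at s)" if "s \<in> {a'<..<b} - \<tau> ` {..<J}" for s
    proof (rule deriv_at)
      show "0 \<le> s" using that assms by auto
      show "s \<notin> range \<tau>"
      proof
        assume "s \<in> range \<tau>"
        then obtain i where "s = \<tau> i" by auto
        moreover have "i < J" using \<open>s = \<tau> i\<close> that J tau_less_iff[of i J] by auto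
        ultimately show False using that by auto
      qed
    qed
  qed (use assms in auto)
qed

lemma ggv_int: "0 \<le> a' \<Longrightarrow> (\<lambda>s. gg s *v \<theta>) integrable_on {a'..b}"
  using integrable_linear[OF gg_int bl_mv] by (simp add: o_def)

lemma int_ggv: "0 \<le> a' \<Longrightarrow> integral {a'..b} (\<lambda>s. gg s *v \<theta>) = integral {a'..b} gg *v \<theta>"
  using integral_linear[OF gg_int bl_mv] by (simp add: o_def)

lemma p_eq:
  assumes "0 \<le> t" "0 \<le> \<sigma>"
  shows "x t - x \<sigma> - oint \<sigma> t ff = oint \<sigma> t gg *v \<theta>"
proof (cases "\<sigma> \<le> t")
  case True
  have "integral {\<sigma>..t} (\<lambda>s. ff s + gg s *v \<theta>) = x t - x \<sigma>"
    using int_rep[OF assms(2) True] by blast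
  moreover have "integral {\<sigma>..t} (\<lambda>s. ff s + gg s *v \<theta>) = integral {\<sigma>..t} ff + integral {\<sigma>..t} gg *v \<theta>"
    using integral_add[OF ff_int ggv_int] int_ggv assms by simp
  ultimately have "x t - x \<sigma> - integral {\<sigma>..t} ff = integral {\<sigma>..t} gg *v \<theta>"
    by (metis add_diff_cancel_left')
  with True show ?thesis unfolding oint_def by simp
next
  case False
  have "integral {t..\<sigma>} (\<lambda>s. ff s + gg s *v \<theta>) = x \<sigma> - x t"
    using int_rep[OF assms(1)] False by auto
  moreover have "integral {t..\<sigma>} (\<lambda>s. ff s + gg s *v \<theta>) = integral {t..\<sigma>} ff + integral {t..\<sigma>} gg *v \<theta>"
    using integral_add[OF ff_int ggv_int] int_ggv assms by simp
  ultimately have "x \<sigma> - x t - integral {t..\<sigma>} ff = integral {t..\<sigma>} gg *v \<theta>"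
    by (metis add_diff_cancel_left')
  then have "x t - x \<sigma> + integral {t..\<sigma>} ff = (- integral {t..\<sigma>} gg) *v \<theta>"
    by (simp add: mv_neg algebra_simps)
  with False show ?thesis unfolding oint_def by simp
qed

definition II where "II s = integral {0..s} gg"

lemma oint_II: assumes "0 \<le> t" "0 \<le> \<sigma>" shows "oint \<sigma> t gg = II t - II \<sigma>"
proof (cases "\<sigma> \<le> t")
  case True
  have "integral {0..\<sigma>} gg + integral {\<sigma>..t} gg = integral {0..t} gg"
    by (rule Henstock_Kurzweil_Integration.integral_combine) (use True assms gg_int in auto)
  then show ?thesis using True unfolding oint_def II_def by (simp add: algebra_simps)
next
  case False
  have "integral {0..t} gg + integral {t..\<sigma>} gg = integral {0..\<sigma>} gg"
    by (rule Henstock_Kurzweil_Integration.integral_combine) (use False assms gg_int in auto)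
  then show ?thesis using False unfolding oint_def II_def by (simp add: algebra_simps)
qed

lemma II_cont: "continuous_on {0..b} II"
  unfolding II_def by (rule indefinite_integral_continuous_1[OF gg_int]) simp

lemma sq_eq: "{\<mu>..b} \<times> {\<mu>..b} = cbox (\<mu>, \<mu>) (b::real, b)"
  by (simp add: cbox_Pair_eq)

lemma q_cont:
  assumes "0 \<le> \<mu>"
  shows "continuous_on ({\<mu>..b} \<times> {\<mu>..b}) (\<lambda>(t, \<sigma>). oint \<sigma> t gg)"
proof -
  have "continuous_on ({\<mu>..b} \<times> {\<mu>..b}) (\<lambda>z. II (fst z) - II (snd z))"
    by (intro continuous_intros continuous_on_compose2[OF II_cont[of b]]) (use assms in auto)
  moreover have "(\<lambda>(t, \<sigma>). oint \<sigma> t gg) z = II (fst z) - II (snd z)" if "z \<in> {\<mu>..b} \<times> {\<mu>..b}" for z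
    using that assms oint_II by (auto simp: split_beta)
  ultimately show ?thesis using continuous_on_cong by (smt (verit, ccfv_SIG))
qed

lemma GG_cont:
  assumes "0 \<le> \<mu>"
  shows "continuous_on ({\<mu>..b} \<times> {\<mu>..b}) (\<lambda>(t, \<sigma>). transpose (oint \<sigma> t gg) ** oint \<sigma> t gg)"
proof -
  have Bc: "continuous_on UNIV (\<lambda>M::real^'l^'n. transpose M ** M)"
    unfolding matrix_matrix_mult_def transpose_def by (intro continuous_intros)
  have "continuous_on ({\<mu>..b} \<times> {\<mu>..b}) (\<lambda>z. (\<lambda>M::real^'l^'n. transpose M ** M) ((\<lambda>(t, \<sigma>). oint \<sigma> t gg) z))"
    by (rule continuous_on_compose2[OF Bc q_cont[OF assms]]) auto
  then show ?thesis by (simp add: split_beta)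
qed

lemma Z_eq:
  assumes "0 \<le> \<mu>"
  shows "integral ({\<mu>..b} \<times> {\<mu>..b}) (\<lambda>(t, \<sigma>). transpose (oint \<sigma> t gg) *v (x t - x \<sigma> - oint \<sigma> t ff))
       = integral ({\<mu>..b} \<times> {\<mu>..b}) (\<lambda>(t, \<sigma>). transpose (oint \<sigma> t gg) ** oint \<sigma> t gg) *v \<theta>"
proof -
  have "integral ({\<mu>..b} \<times> {\<mu>..b}) (\<lambda>(t, \<sigma>). transpose (oint \<sigma> t gg) *v (x t - x \<sigma> - oint \<sigma> t ff))
      = integral ({\<mu>..b} \<times> {\<mu>..b}) ((\<lambda>M. M *v \<theta>) \<circ> (\<lambda>(t, \<sigma>). transpose (oint \<sigma> t gg) ** oint \<sigma> t gg))"
    by (rule integral_cong) (use assms in \<open>auto simp: p_eq matrix_vector_mul_assoc simp del: transpose_matrix_vector\<close>)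
  also have "\<dots> = integral ({\<mu>..b} \<times> {\<mu>..b}) (\<lambda>(t, \<sigma>). transpose (oint \<sigma> t gg) ** oint \<sigma> t gg) *v \<theta>"
  proof (rule integral_linear[OF _ bl_mv])
    show "(\<lambda>(t, \<sigma>). transpose (oint \<sigma> t gg) ** oint \<sigma> t gg) integrable_on {\<mu>..b} \<times> {\<mu>..b}"
      unfolding sq_eq by (rule integrable_continuous) (use GG_cont[OF assms, of b] sq_eq in simp)
  qed
  finally show ?thesis .
qed


definition mu where "mu i = Min {\<tau> j | j. j \<le> i \<and> \<tau> j \<ge> \<tau> (Suc i) - real Nt * T}"
definition GG where "GG i = integral ({mu i..\<tau> (Suc i)} \<times> {mu i..\<tau> (Suc i)}) (\<lambda>(t, \<sigma>). transpose (oint \<sigma> t gg) ** oint \<sigma> t gg)"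
definition ZZ where "ZZ i = integral ({mu i..\<tau> (Suc i)} \<times> {mu i..\<tau> (Suc i)}) (\<lambda>(t, \<sigma>). transpose (oint \<sigma> t gg) *v (x t - x \<sigma> - oint \<sigma> t ff))"

lemma upd2: "is_arg_min (\<lambda>\<phi>. (norm (\<phi> - \<theta>h (\<tau> i)))\<^sup>2) (\<lambda>\<phi>. ZZ i = GG i *v \<phi>) (\<theta>h (\<tau> (Suc i)))"
  using upd[of i] unfolding Let_def ZZ_def GG_def mu_def ff_def gg_def uu_def by simp

lemma mu_set: "finite {\<tau> j | j. j \<le> i \<and> \<tau> j \<ge> \<tau> (Suc i) - real Nt * T}"
   "\<tau> i \<in> {\<tau> j | j. j \<le> i \<and> \<tau> j \<ge> \<tau> (Suc i) - real Nt * T}"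
proof -
  have "{\<tau> j | j. j \<le> i \<and> \<tau> j \<ge> \<tau> (Suc i) - real Nt * T} \<subseteq> \<tau> ` {..i}" by auto
  then show "finite {\<tau> j | j. j \<le> i \<and> \<tau> j \<ge> \<tau> (Suc i) - real Nt * T}" using finite_subset by blast
  have "T \<le> real Nt * T" using Nt1 Tpos by simp
  then have "\<tau> i \<ge> \<tau> (Suc i) - real Nt * T" using tau_step[of i] by simp
  then show "\<tau> i \<in> {\<tau> j | j. j \<le> i \<and> \<tau> j \<ge> \<tau> (Suc i) - real Nt * T}" by blast
qed

lemma mu_nonneg: "0 \<le> mu i"
proof -
  have "mu i \<in> {\<tau> j | j. j \<le> i \<and> \<tau> j \<ge> \<tau> (Suc i) - real Nt * T}"
    unfolding mu_def using mu_set by (intro Min_in) auto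
  then show ?thesis using tau_nonneg by auto
qed

lemma ZG: "ZZ i = GG i *v \<theta>"
  unfolding ZZ_def GG_def by (rule Z_eq[OF mu_nonneg])

lemma stay1: "\<theta>h (\<tau> i) = \<theta> \<Longrightarrow> \<theta>h (\<tau> (Suc i)) = \<theta>"
  using upd2[of i] ZG[of i] unfolding is_arg_min_def by force

lemma stay: "\<theta>h (\<tau> i) = \<theta> \<Longrightarrow> i \<le> j \<Longrightarrow> \<theta>h (\<tau> j) = \<theta>"
proof (induction j)
  case 0 then show ?case by simp
next
  case (Suc j)
  show ?case
  proof (cases "i \<le> j")
    case True then show ?thesis using Suc stay1[of j] by simp
  next
    case False then have "i = Suc j" using Suc by simp
    then show ?thesis using Suc by simp
  qed
qed

lemma step_le: "norm (\<theta>h (\<tau> (Suc i)) - \<theta>h (\<tau> i)) \<le> norm (\<theta> - \<theta>h (\<tau> i))"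
proof -
  have "\<not> (norm (\<theta> - \<theta>h (\<tau> i)))\<^sup>2 < (norm (\<theta>h (\<tau> (Suc i)) - \<theta>h (\<tau> i)))\<^sup>2"
    using upd2[of i] ZG[of i] unfolding is_arg_min_def by blast
  then show ?thesis by (simp add: not_less power2_le_iff_abs_le)
qed

lemma th_bound: "norm (\<theta>h (\<tau> i) - \<theta>) \<le> 2 ^ i * norm (\<theta>h0 - \<theta>)"
proof (induction i)
  case 0 then show ?case using tau0 th0 by simp
next
  case (Suc i)
  have "norm (\<theta>h (\<tau> (Suc i)) - \<theta>) \<le> norm (\<theta>h (\<tau> (Suc i)) - \<theta>h (\<tau> i)) + norm (\<theta>h (\<tau> i) - \<theta>)"
    using norm_triangle_ineq[of "\<theta>h (\<tau> (Suc i)) - \<theta>h (\<tau> i)" "\<theta>h (\<tau> i) - \<theta>"] by simp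
  also have "\<dots> \<le> 2 * norm (\<theta>h (\<tau> i) - \<theta>)" using step_le[of i] by (simp add: norm_minus_commute)
  also have "\<dots> \<le> 2 * (2 ^ i * norm (\<theta>h0 - \<theta>))" using Suc by simp
  finally show ?case by simp
qed

lemma mu_zero: "\<tau> (Suc i) < real Nt * T \<Longrightarrow> mu i = 0"
proof -
  assume h: "\<tau> (Suc i) < real Nt * T"
  have "0 \<in> {\<tau> j | j. j \<le> i \<and> \<tau> j \<ge> \<tau> (Suc i) - real Nt * T}"
    using h tau0 by (intro CollectI exI[of _ 0]) auto
  then have "mu i \<le> 0" unfolding mu_def using mu_set(1) by (intro Min_le) auto
  then show ?thesis using mu_nonneg[of i] by simp
qed


end


context hyb begin
lemma annih:
  assumes b: "\<tau> (Suc i) < real Nt * T" and ji: "j \<le> i" and t: "t \<in> {\<tau> j..\<tau> (Suc j)}"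
  shows "g (x t) (k (\<theta>h (\<tau> j)) (x t)) *v (\<theta>h (\<tau> (Suc i)) - \<theta>) = 0"
proof -
  define b where "b = \<tau> (Suc i)"
  define d where "d = \<theta>h (\<tau> (Suc i)) - \<theta>"
  define q where "q = (\<lambda>(t, \<sigma>). oint \<sigma> t gg)"
  define M where "M = (\<lambda>(t, \<sigma>). transpose (oint \<sigma> t gg) ** oint \<sigma> t gg)"
  have b0: "0 < b" unfolding b_def using tau_nonneg[of i] inc[of i] by linarith
  have mu0: "mu i = 0" using mu_zero[OF b] .
  have Mint: "M integrable_on ({0..b} \<times> {0..b})"
    unfolding sq_eq M_def by (rule integrable_continuous) (use GG_cont[of 0 b] sq_eq in simp)
  have "ZZ i = GG i *v \<theta>h (\<tau> (Suc i))" using upd2[of i] unfolding is_arg_min_def by blast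
  then have "GG i *v d = 0" unfolding d_def using ZG[of i] by (simp add: matrix_vector_mult_diff_distrib)
  moreover have "GG i = integral ({0..b} \<times> {0..b}) M" unfolding GG_def M_def mu0 b_def ..
  ultimately have "integral ({0..b} \<times> {0..b}) M *v d = 0" by simp
  moreover have "integral ({0..b} \<times> {0..b}) ((\<lambda>N. N *v d) \<circ> M) = integral ({0..b} \<times> {0..b}) M *v d"
    by (rule integral_linear[OF Mint bl_mv])
  ultimately have I0: "integral ({0..b} \<times> {0..b}) ((\<lambda>N. N *v d) \<circ> M) = 0" by simp
  have Mdint: "((\<lambda>N. N *v d) \<circ> M) integrable_on ({0..b} \<times> {0..b})"
    by (rule integrable_linear[OF Mint bl_mv])
  have "integral ({0..b} \<times> {0..b}) ((inner d) \<circ> ((\<lambda>N. N *v d) \<circ> M)) = inner d (integral ({0..b} \<times> {0..b}) ((\<lambda>N. N *v d) \<circ> M))"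
    by (rule integral_linear[OF Mdint bounded_linear_inner_right])
  then have I1: "integral ({0..b} \<times> {0..b}) ((inner d) \<circ> ((\<lambda>N. N *v d) \<circ> M)) = 0" using I0 by simp
  define \<psi> where "\<psi> = (\<lambda>z. (norm (q z *v d))\<^sup>2)"
  have psi_eq: "((inner d) \<circ> ((\<lambda>N. N *v d) \<circ> M)) z = \<psi> z" for z
  proof -
    obtain t \<sigma> where z: "z = (t, \<sigma>)" by fastforce
    have "inner d ((transpose (oint \<sigma> t gg) ** oint \<sigma> t gg) *v d) = inner d (transpose (oint \<sigma> t gg) *v (oint \<sigma> t gg *v d))"
      by (simp add: matrix_vector_mul_assoc del: transpose_matrix_vector)
    also have "\<dots> = inner d ((oint \<sigma> t gg *v d) v* oint \<sigma> t gg)"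
      by (simp only: transpose_matrix_vector)
    also have "\<dots> = inner ((oint \<sigma> t gg *v d) v* oint \<sigma> t gg) d"
      by (rule inner_commute)
    also have "\<dots> = inner (oint \<sigma> t gg *v d) (oint \<sigma> t gg *v d)"
      by (rule dot_lmul_matrix)
    finally show ?thesis unfolding z \<psi>_def q_def M_def by (simp add: power2_norm_eq_inner)
  qed
  have psi_cont: "continuous_on (cbox (0, 0) (b, b)) \<psi>"
  proof -
    have "continuous_on ({0..b} \<times> {0..b}) (\<lambda>z. (norm ((\<lambda>N. N *v d) (q z)))\<^sup>2)"
      by (intro continuous_intros continuous_on_compose2[OF linear_continuous_on[OF bl_mv] q_cont[of 0 b, folded q_def]]) auto
    then show ?thesis unfolding \<psi>_def sq_eq by simp
  qed
  have psi_int: "(\<psi> has_integral 0) (cbox (0, 0) (b, b))"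
  proof -
    have "((inner d) \<circ> ((\<lambda>N. N *v d) \<circ> M)) integrable_on ({0..b} \<times> {0..b})"
      by (rule integrable_linear[OF Mdint bounded_linear_inner_right])
    from this[unfolded has_integral_integral] have "(((inner d) \<circ> ((\<lambda>N. N *v d) \<circ> M)) has_integral 0) ({0..b} \<times> {0..b})"
      using I1 by simp
    moreover have "((inner d) \<circ> ((\<lambda>N. N *v d) \<circ> M)) = \<psi>" by (rule ext) (rule psi_eq)
    ultimately show ?thesis using sq_eq by simp
  qed
  have boxne: "box (0, 0) (b, b) \<noteq> {}"
  proof -
    have "Henstock_Kurzweil_Integration.content (cbox (0::real, 0::real) (b, b)) > 0" using b0 by (simp add: content_Pair)
    then show ?thesis using content_pos_lt_eq box_ne_empty(2) by metis
  qed
  have psi0: "\<psi> z = 0" if "z \<in> cbox (0, 0) (b, b)" for z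
    by (rule has_integral_0_cbox_imp_0[OF psi_cont _ psi_int boxne that])
       (auto simp: \<psi>_def)
  have jb: "\<tau> (Suc j) \<le> b" unfolding b_def using ji tau_le_iff by simp
  define Gj where "Gj = (\<lambda>s. g (x s) (k (\<theta>h (\<tau> j)) (x s)) *v d)"
  have Gjc: "continuous_on {\<tau> j..\<tau> (Suc j)} Gj"
    unfolding Gj_def by (intro continuous_on_compose2[OF linear_continuous_on[OF bl_mv]] continuous_on_compose2[OF Wg_cont xc_piece]) auto
  have Phi0: "integral {\<tau> j..s} Gj = 0" if s: "s \<in> {\<tau> j..\<tau> (Suc j)}" for s
  proof -
    have "(\<tau> j, s) \<in> cbox (0, 0) (b, b)" \<comment> \<open>careful: q (t, sigma) = oint sigma t\<close>
      using s jb tau_nonneg[of j] by (auto simp: cbox_Pair_eq)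
    have "(s, \<tau> j) \<in> cbox (0, 0) (b, b)"
      using s jb tau_nonneg[of j] by (auto simp: cbox_Pair_eq)
    then have "q (s, \<tau> j) *v d = 0" using psi0 unfolding \<psi>_def by simp
    then have "integral {\<tau> j..s} gg *v d = 0" using s unfolding q_def oint_def by simp
    moreover have "integral {\<tau> j..s} (\<lambda>r. gg r *v d) = integral {\<tau> j..s} gg *v d"
      using integral_linear[OF gg_int[of "\<tau> j" s] bl_mv] tau_nonneg by (simp add: o_def)
    moreover have "integral {\<tau> j..s} Gj = integral {\<tau> j..s} (\<lambda>r. gg r *v d)"
    proof (rule integral_spike[where S="{\<tau> (Suc j)}"])
      show "(gg r *v d) = Gj r" if "r \<in> {\<tau> j..s} - {\<tau> (Suc j)}" for r
        using that s dyn(1)[of r j] unfolding Gj_def gg_def uu_def by auto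
    qed auto
    ultimately show ?thesis by simp
  qed
  have tj: "\<tau> j < \<tau> (Suc j)" by (rule inc)
  have D1: "((\<lambda>u. integral {\<tau> j..u} Gj) has_vector_derivative Gj t) (at t within {\<tau> j..\<tau> (Suc j)})"
    by (rule integral_has_vector_derivative[OF Gjc t])
  have D2: "((\<lambda>u. 0) has_vector_derivative Gj t) (at t within {\<tau> j..\<tau> (Suc j)})"
    by (rule has_vector_derivative_transform[OF t _ D1]) (use Phi0 in simp)
  have D3: "((\<lambda>u. 0::real^'n) has_vector_derivative 0) (at t within {\<tau> j..\<tau> (Suc j)})"
    by (rule has_vector_derivative_const)
  have "Gj t = 0"
    by (rule vector_derivative_unique_within_closed_interval[OF tj _ D2[unfolded cbox_interval[symmetric]] D3[unfolded cbox_interval[symmetric]]]) (use t in auto)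
  then show ?thesis unfolding Gj_def d_def .
qed


lemma local_zero:
  assumes L: "L > 0" and \<rho>: "\<rho> > 0"
    and lin: "\<And>y. norm y \<le> \<rho> \<Longrightarrow> norm (F (\<theta>h (\<tau> i)) y) \<le> L * norm y"
    and c: "c \<in> {\<tau> i..<\<tau> (Suc i)}" and xc0: "x c = 0"
  shows "\<exists>e>0. c + e \<le> \<tau> (Suc i) \<and> (\<forall>s\<in>{c..c+e}. x s = 0)"
proof -
  define a b where "a = \<tau> i" and "b = \<tau> (Suc i)"
  have cab: "a \<le> c" "c < b" using c unfolding a_def b_def by auto
  have xcab: "continuous_on {a..b} x" unfolding a_def b_def by (rule xc_piece)
  have cin: "c \<in> {a..b}" using cab by auto
  have "continuous (at c within {a..b}) x"
    using xcab[unfolded continuous_on_eq_continuous_within] cin by blast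
  then obtain \<epsilon> where \<epsilon>: "\<epsilon> > 0" "\<And>s. s \<in> {a..b} \<Longrightarrow> dist s c < \<epsilon> \<Longrightarrow> dist (x s) (x c) < \<rho>"
    unfolding continuous_within_eps_delta using \<rho> by blast
  define e where "e = min (\<epsilon> / 2) (min (1 / (2 * L)) ((b - c) / 2))"
  have e0: "e > 0" unfolding e_def using \<epsilon> L cab by auto
  have "e \<le> (b - c) / 2" unfolding e_def by linarith
  moreover have "(b - c) / 2 < b - c" using cab by simp
  ultimately have ceb: "c + e < b" by linarith
  have "e \<le> 1 / (2 * L)" unfolding e_def by linarith
  then have "L * e \<le> L * (1 / (2 * L))" using L by (intro mult_left_mono) auto
  then have eL: "L * e \<le> 1 / 2" using L by simp
  have small: "norm (x s) \<le> \<rho>" if "s \<in> {c..c+e}" for s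
  proof -
    have "dist s c < \<epsilon>" using that e0 \<epsilon> unfolding e_def by (auto simp: dist_real_def)
    then have "dist (x s) (x c) < \<rho>" using \<epsilon>(2)[of s] that cab ceb by auto
    then show ?thesis using xc0 by simp
  qed
  have cce: "continuous_on {c..c+e} x"
    by (rule continuous_on_subset[OF xcab]) (use cab ceb in auto)
  obtain s0 where s0: "s0 \<in> {c..c+e}" "\<And>s. s \<in> {c..c+e} \<Longrightarrow> norm (x s) \<le> norm (x s0)"
    using continuous_attains_sup[OF compact_Icc _ continuous_on_norm[OF cce]] e0 by fastforce
  have bnd: "norm (x s - x c) \<le> (L * norm (x s0)) * norm (s - c)" if s: "s \<in> {c..c+e}" for s
  proof (rule differentiable_bound[where S="{c..c+e}" and f'="\<lambda>r h. h *\<^sub>R F (\<theta>h (\<tau> i)) (x r)"])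
    show "(x has_derivative (\<lambda>h. h *\<^sub>R F (\<theta>h (\<tau> i)) (x r))) (at r within {c..c+e})" if r: "r \<in> {c..c+e}" for r
    proof -
      have "r \<in> {\<tau> i..<\<tau> (Suc i)}" using r cab ceb unfolding a_def b_def by auto
      from dyn(2)[OF this] have "(x has_vector_derivative F (\<theta>h (\<tau> i)) (x r)) (at r within {c..c+e})"
        by (rule has_vector_derivative_within_subset) (use cab ceb in \<open>auto simp: a_def b_def\<close>)
      then show ?thesis unfolding has_vector_derivative_def .
    qed
    show "onorm (\<lambda>h. h *\<^sub>R F (\<theta>h (\<tau> i)) (x r)) \<le> L * norm (x s0)" if r: "r \<in> {c..c+e}" for r
    proof -
      have "onorm (\<lambda>h::real. h *\<^sub>R F (\<theta>h (\<tau> i)) (x r)) = norm (F (\<theta>h (\<tau> i)) (x r))"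
        using onorm_scaleR_left[OF bounded_linear_ident, of "F (\<theta>h (\<tau> i)) (x r)"] onorm_id[where 'a=real] by simp
      also have "\<dots> \<le> L * norm (x r)" using lin small[OF r] by blast
      also have "\<dots> \<le> L * norm (x s0)" using s0(2)[OF r] L by simp
      finally show ?thesis .
    qed
  qed (use s e0 in auto)
  have "norm (x s0) \<le> (L * norm (x s0)) * e"
  proof -
    have "norm (x s0) \<le> (L * norm (x s0)) * norm (s0 - c)" using bnd[OF s0(1)] xc0 by simp
    also have "\<dots> \<le> (L * norm (x s0)) * e" using s0(1) L by (intro mult_left_mono) auto
    finally show ?thesis .
  qed
  also have "\<dots> = norm (x s0) * (L * e)" by simp
  also have "\<dots> \<le> norm (x s0) * (1 / 2)" using eL by (intro mult_left_mono) auto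
  finally have "norm (x s0) = 0" by simp
  then have "\<forall>s\<in>{c..c+e}. x s = 0" using s0(2) by (metis norm_eq_zero norm_le_zero_iff)
  then show ?thesis using e0 ceb unfolding b_def by (intro exI[of _ e]) auto
qed

lemma piece_zero:
  assumes L: "L > 0" and \<rho>: "\<rho> > 0"
    and lin: "\<And>y. norm y \<le> \<rho> \<Longrightarrow> norm (F (\<theta>h (\<tau> i)) y) \<le> L * norm y"
    and x0: "x (\<tau> i) = 0"
  shows "\<forall>s\<in>{\<tau> i..\<tau> (Suc i)}. x s = 0"
proof -
  define a b where "a = \<tau> i" and "b = \<tau> (Suc i)"
  have ab: "a < b" unfolding a_def b_def by (rule inc)
  define A where "A = {t\<in>{a..b}. \<forall>s\<in>{a..t}. x s = 0}"
  have aA: "a \<in> A" unfolding A_def using ab x0 a_def by auto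
  have bdd: "bdd_above A" unfolding A_def by (rule bdd_aboveI[of _ b]) auto
  define c where "c = Sup A"
  have ac: "a \<le> c" unfolding c_def by (rule cSup_upper[OF aA bdd])
  have cb: "c \<le> b" unfolding c_def using aA by (intro cSup_least) (auto simp: A_def)
  have below: "x s = 0" if "a \<le> s" "s < c" for s
  proof -
    have "s < Sup A" using that(2) unfolding c_def .
    then obtain t where "t \<in> A" "s < t" using less_cSup_iff[of A s] aA bdd by auto
    then show ?thesis unfolding A_def using that by auto
  qed
  have xc: "x c = 0"
  proof (cases "a = c")
    case True then show ?thesis using x0 a_def by simp
  next
    case False
    then have acl: "a < c" using ac by simp
    have cl: "closed {s \<in> {a..c}. x s = 0}"
      by (rule continuous_closed_preimage_constant)
         (use continuous_on_subset[OF xc_piece[of i "Suc i"]] cb in \<open>auto simp: a_def b_def\<close>)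
    have "{a..<c} \<subseteq> {s \<in> {a..c}. x s = 0}" using below by auto
    then have "closure {a..<c} \<subseteq> {s \<in> {a..c}. x s = 0}" using cl closure_minimal by blast
    moreover have "c \<in> closure {a..<c}" using acl by simp
    ultimately show ?thesis by blast
  qed
  have cA: "c \<in> A" unfolding A_def using ac cb below xc by (auto simp: le_less)
  have "c = b"
  proof (rule ccontr)
    assume "c \<noteq> b"
    then have "c \<in> {\<tau> i..<\<tau> (Suc i)}" using ac cb a_def b_def by auto
    from local_zero[OF L \<rho> lin this xc] obtain e where e: "e > 0" "c + e \<le> b" "\<forall>s\<in>{c..c+e}. x s = 0"
      unfolding b_def by blast
    have "c + e \<in> A" unfolding A_def using cA e ac
      by (auto simp: A_def)
    then have "c + e \<le> c" unfolding c_def by (rule cSup_upper[OF _ bdd])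
    then show False using e by simp
  qed
  then show ?thesis using cA unfolding A_def a_def b_def by auto
qed


lemma zero_forever:
  assumes lin: "\<And>\<phi>. \<exists>L>0. \<exists>\<rho>>0. \<forall>y. norm y \<le> \<rho> \<longrightarrow> norm (F \<phi> y) \<le> L * norm y"
    and z: "x (\<tau> i) = 0" and s: "\<tau> i \<le> s"
  shows "x s = 0"
proof -
  have pz: "x (\<tau> j) = 0 \<Longrightarrow> \<forall>s\<in>{\<tau> j..\<tau> (Suc j)}. x s = 0" for j
  proof -
    assume "x (\<tau> j) = 0"
    moreover obtain L \<rho> where "L > 0" "\<rho> > 0" "\<forall>y. norm y \<le> \<rho> \<longrightarrow> norm (F (\<theta>h (\<tau> j)) y) \<le> L * norm y"
      using lin by blast
    ultimately show ?thesis using piece_zero[of L \<rho> j] by blast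
  qed
  have all: "\<forall>s\<in>{\<tau> i..\<tau> (i + n)}. x s = 0" for n
  proof (induction n)
    case 0 then show ?case using z by simp
  next
    case (Suc n)
    have "x (\<tau> (i + n)) = 0" using Suc tau_le_iff[of i "i+n"] by simp
    then have "\<forall>s\<in>{\<tau> (i + n)..\<tau> (Suc (i + n))}. x s = 0" by (rule pz)
    then show ?case using Suc by (metis add_Suc_right atLeastAtMost_iff linorder_le_cases)
  qed
  obtain J where J: "s < \<tau> J" using unb by blast
  then have "i \<le> J" using s tau_le_iff[of i J] by linarith
  then have "J = i + (J - i)" by simp
  then show ?thesis using all[of "J - i"] s J by (metis atLeastAtMost_iff less_imp_le)
qed

lemma trig_bound:
  assumes xi: "x (\<tau> i) \<noteq> 0"
    and VQ: "V (\<theta>h (\<tau> i)) (x (\<tau> i)) \<le> Q (\<theta>h (\<tau> i)) (x (\<tau> i))"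
    and apos: "a (x (\<tau> i)) > 0"
    and Vc: "continuous_on UNIV (V (\<theta>h (\<tau> i)))"
    and t: "t \<in> {\<tau> i..\<tau> (Suc i)}"
  shows "V (\<theta>h (\<tau> i)) (x t) \<le> Q (\<theta>h (\<tau> i)) (x (\<tau> i)) + a (x (\<tau> i))"
proof (rule ccontr)
  define c where "c = Q (\<theta>h (\<tau> i)) (x (\<tau> i)) + a (x (\<tau> i))"
  assume "\<not> V (\<theta>h (\<tau> i)) (x t) \<le> Q (\<theta>h (\<tau> i)) (x (\<tau> i)) + a (x (\<tau> i))"
  then have gt: "c < V (\<theta>h (\<tau> i)) (x t)" unfolding c_def by simp
  have lt: "V (\<theta>h (\<tau> i)) (x (\<tau> i)) < c" unfolding c_def using VQ apos by simp
  have cont: "continuous_on {\<tau> i..t} (\<lambda>s. V (\<theta>h (\<tau> i)) (x s))"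
    by (rule continuous_on_compose2[OF Vc continuous_on_subset[OF xc_piece[of i "Suc i"]]]) (use t in auto)
  obtain s where s: "\<tau> i \<le> s" "s \<le> t" "V (\<theta>h (\<tau> i)) (x s) = c"
    using IVT'[of "\<lambda>s. V (\<theta>h (\<tau> i)) (x s)" "\<tau> i" c t, OF _ _ _ cont] lt gt t by auto
  have si: "\<tau> i < s" using s lt by (metis order_less_irrefl le_less)
  then have "s \<in> {t. t > \<tau> i \<and> V (\<theta>h (\<tau> i)) (x t) = Q (\<theta>h (\<tau> i)) (x (\<tau> i)) + a (x (\<tau> i))}"
    using s unfolding c_def by simp
  then have "Inf (ereal ` {t. t > \<tau> i \<and> V (\<theta>h (\<tau> i)) (x t) = Q (\<theta>h (\<tau> i)) (x (\<tau> i)) + a (x (\<tau> i))}) \<le> ereal s"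
    by (intro Inf_lower) auto
  then have "ereal (\<tau> (Suc i)) \<le> ereal s" unfolding trig using xi by (simp add: min.coboundedI2)
  then have "\<tau> (Suc i) \<le> s" by simp
  then have "s = t" using s t by auto
  then show False using s gt by simp
qed

lemma confine:
  assumes K1: "K1 > 0" and Rb: "Rb > 0"
    and W: "\<And>y. norm y \<le> Rb \<Longrightarrow> K1 * (norm y)\<^sup>2 \<le> W y"
    and xs: "norm (x (\<tau> i)) < Rb"
    and bnd: "\<And>t. t \<in> {\<tau> i..\<tau> (Suc i)} \<Longrightarrow> W (x t) \<le> C"
    and C: "C < K1 * Rb\<^sup>2"
    and t: "t \<in> {\<tau> i..\<tau> (Suc i)}"
  shows "norm (x t) < Rb"
proof (rule ccontr)
  assume "\<not> norm (x t) < Rb"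
  then have ge: "Rb \<le> norm (x t)" by simp
  have cont: "continuous_on {\<tau> i..t} (\<lambda>s. norm (x s))"
    by (intro continuous_on_norm continuous_on_subset[OF xc_piece[of i "Suc i"]]) (use t in auto)
  obtain s where s: "\<tau> i \<le> s" "s \<le> t" "norm (x s) = Rb"
    using IVT'[of "\<lambda>s. norm (x s)" "\<tau> i" Rb t, OF _ _ _ cont] xs ge t by auto
  have "K1 * Rb\<^sup>2 \<le> W (x s)" using W[of "x s"] s by simp
  also have "\<dots> \<le> C" using bnd[of s] s t by auto
  finally show False using C by simp
qed

lemma H3_prereq:
  assumes NNt: "N < Nt"
  shows "\<forall>i<N. \<forall>t\<in>{\<tau> i..<\<tau> (Suc i)}.
                  (x has_vector_derivative
                     (f (x t) (k (\<theta> + (\<theta>h (\<tau> i) - \<theta>)) (x t)) + g (x t) (k (\<theta> + (\<theta>h (\<tau> i) - \<theta>)) (x t)) *v \<theta>))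
                     (at t within {t..})"
    and "\<forall>i<N. \<forall>t\<in>{\<tau> i<..<\<tau> (Suc i)}.
                  (x has_vector_derivative
                     (f (x t) (k (\<theta> + (\<theta>h (\<tau> i) - \<theta>)) (x t)) + g (x t) (k (\<theta> + (\<theta>h (\<tau> i) - \<theta>)) (x t)) *v \<theta>))
                     (at t)"
    and "\<forall>i<N. \<forall>j\<le>i. \<forall>t\<in>{\<tau> j..\<tau> (Suc j)}.
                  g (x t) (k (\<theta> + (\<theta>h (\<tau> j) - \<theta>)) (x t)) *v (\<theta>h (\<tau> (Suc i)) - \<theta>) = 0"
    and "continuous_on {0..\<tau> N} x"
proof -
  show "\<forall>i<N. \<forall>t\<in>{\<tau> i..<\<tau> (Suc i)}.
                  (x has_vector_derivative
                     (f (x t) (k (\<theta> + (\<theta>h (\<tau> i) - \<theta>)) (x t)) + g (x t) (k (\<theta> + (\<theta>h (\<tau> i) - \<theta>)) (x t)) *v \<theta>))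
                     (at t within {t..})"
  proof (intro allI impI ballI)
    fix i t assume t: "t \<in> {\<tau> i..<\<tau> (Suc i)}"
    have "(x has_vector_derivative F (\<theta>h (\<tau> i)) (x t)) (at t within {t..<\<tau> (Suc i)})"
      by (rule has_vector_derivative_within_subset[OF dyn(2)[OF t]]) (use t in auto)
    moreover have "at t within {t..<\<tau> (Suc i)} = at t within {t..}"
      by (rule at_within_nhd[where S="{..<\<tau> (Suc i)}"]) (use t in auto)
    ultimately show "(x has_vector_derivative
                     (f (x t) (k (\<theta> + (\<theta>h (\<tau> i) - \<theta>)) (x t)) + g (x t) (k (\<theta> + (\<theta>h (\<tau> i) - \<theta>)) (x t)) *v \<theta>))
                     (at t within {t..})" unfolding F_def by simp
  qed
  show "\<forall>i<N. \<forall>t\<in>{\<tau> i<..<\<tau> (Suc i)}.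
                  (x has_vector_derivative
                     (f (x t) (k (\<theta> + (\<theta>h (\<tau> i) - \<theta>)) (x t)) + g (x t) (k (\<theta> + (\<theta>h (\<tau> i) - \<theta>)) (x t)) *v \<theta>))
                     (at t)"
  proof (intro allI impI ballI)
    fix i t assume t: "t \<in> {\<tau> i<..<\<tau> (Suc i)}"
    then have "t \<in> {\<tau> i..<\<tau> (Suc i)}" by auto
    from dyn(2)[OF this] have "(x has_vector_derivative F (\<theta>h (\<tau> i)) (x t)) (at t within {\<tau> i..<\<tau> (Suc i)})" .
    moreover have "at t within {\<tau> i..<\<tau> (Suc i)} = at t"
      by (rule at_within_open_subset[where S="{\<tau> i<..<\<tau> (Suc i)}"]) (use t in auto)
    ultimately show "(x has_vector_derivative
                     (f (x t) (k (\<theta> + (\<theta>h (\<tau> i) - \<theta>)) (x t)) + g (x t) (k (\<theta> + (\<theta>h (\<tau> i) - \<theta>)) (x t)) *v \<theta>))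
                     (at t)" unfolding F_def by simp
  qed
  show "\<forall>i<N. \<forall>j\<le>i. \<forall>t\<in>{\<tau> j..\<tau> (Suc j)}.
                  g (x t) (k (\<theta> + (\<theta>h (\<tau> j) - \<theta>)) (x t)) *v (\<theta>h (\<tau> (Suc i)) - \<theta>) = 0"
  proof (intro allI impI ballI)
    fix i j t assume i: "i < N" and j: "j \<le> i" and t: "t \<in> {\<tau> j..\<tau> (Suc j)}"
    have "\<tau> (Suc i) \<le> real (Suc i) * T" by (rule tau_bound)
    also have "\<dots> < real Nt * T" using i NNt Tpos by simp
    finally have "\<tau> (Suc i) < real Nt * T" .
    from annih[OF this j t] show "g (x t) (k (\<theta> + (\<theta>h (\<tau> j) - \<theta>)) (x t)) *v (\<theta>h (\<tau> (Suc i)) - \<theta>) = 0" by simp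
  qed
  show "continuous_on {0..\<tau> N} x" by (rule continuous_on_subset[OF xc]) auto
qed


lemma exp_phase:
  assumes th: "\<theta>h (\<tau> j) = \<theta>"
  shows "ode_sol (\<lambda>y. f y (k \<theta> y) + g y (k \<theta> y) *v \<theta>) (\<lambda>t. x (\<tau> j + t))"
proof -
  define t0 where "t0 = \<tau> j"
  have t00: "0 \<le> t0" unfolding t0_def by (rule tau_nonneg)
  have h1: "ff s + gg s *v \<theta> = F \<theta> (x s)" if s: "t0 \<le> s" for s
  proof -
    obtain i where i: "\<tau> i \<le> s" "s < \<tau> (Suc i)" using idx[of s] s t00 by auto
    have "\<tau> j < \<tau> (Suc i)" using s i unfolding t0_def by simp
    then have "j \<le> i" using tau_less_iff by simp
    then have "\<theta>h (\<tau> i) = \<theta>" using stay[OF th] by simp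
    moreover have "\<theta>h s = \<theta>h (\<tau> i)" using dyn(1)[of s i] i by simp
    ultimately show ?thesis unfolding ff_def gg_def uu_def F_def by simp
  qed
  have h3: "continuous_on {t0..b} (\<lambda>s. F \<theta> (x s))" for b
    by (rule continuous_on_compose2[OF F_cont continuous_on_subset[OF xc]]) (use t00 in auto)
  have h2: "x b = x t0 + integral {t0..b} (\<lambda>s. F \<theta> (x s))" if b: "t0 \<le> b" for b
  proof -
    have "integral {t0..b} (\<lambda>s. ff s + gg s *v \<theta>) = x b - x t0"
      using int_rep[OF t00 b] by blast
    moreover have "integral {t0..b} (\<lambda>s. ff s + gg s *v \<theta>) = integral {t0..b} (\<lambda>s. F \<theta> (x s))"
      by (rule integral_cong) (use h1 in auto)
    ultimately show ?thesis by simp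
  qed
  have h4: "(x has_vector_derivative F \<theta> (x t)) (at t within {t0..})" if t: "t0 \<le> t" for t
  proof -
    define b where "b = t + 1"
    have tin: "t \<in> {t0..b}" using t unfolding b_def by simp
    have D: "((\<lambda>u. integral {t0..u} (\<lambda>s. F \<theta> (x s))) has_vector_derivative F \<theta> (x t)) (at t within {t0..b})"
      by (rule integral_has_vector_derivative[OF h3 tin])
    have D': "((\<lambda>u. x t0 + integral {t0..u} (\<lambda>s. F \<theta> (x s))) has_vector_derivative F \<theta> (x t)) (at t within {t0..b})"
      using has_vector_derivative_add[OF has_vector_derivative_const[of "x t0"] D] by simp
    have "(x has_vector_derivative F \<theta> (x t)) (at t within {t0..b})"
      by (rule has_vector_derivative_transform[OF tin _ D']) (metis atLeastAtMost_iff h2)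
    moreover have "at t within {t0..b} = at t within {t0..}"
      by (rule at_within_nhd[where S="{..<b}"]) (use t in \<open>auto simp: b_def\<close>)
    ultimately show ?thesis by simp
  qed
  show ?thesis unfolding ode_sol_def
  proof (intro allI impI)
    fix t :: real assume t: "0 \<le> t"
    have c1: "((\<lambda>s. t0 + s) has_vector_derivative 1) (at t within {0..})"
      by (auto intro!: derivative_eq_intros)
    have im: "(\<lambda>s. t0 + s) ` {0..} = {t0..}"
      by (auto simp: image_iff intro!: exI[where x="_ - t0"])
    have c2: "(x has_vector_derivative F \<theta> (x (t0 + t))) (at ((\<lambda>s. t0 + s) t) within (\<lambda>s. t0 + s) ` {0..})"
      unfolding im using h4[of "t0 + t"] t by simp
    have "((x \<circ> (\<lambda>s. t0 + s)) has_vector_derivative (1::real) *\<^sub>R F \<theta> (x (t0 + t))) (at t within {0..})"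
      by (rule vector_diff_chain_within[OF c1 c2])
    then show "((\<lambda>t. x (\<tau> j + t)) has_vector_derivative f (x (\<tau> j + t)) (k \<theta> (x (\<tau> j + t))) + g (x (\<tau> j + t)) (k \<theta> (x (\<tau> j + t))) *v \<theta>) (at t within {0..})"
      unfolding t0_def F_def by (simp add: o_def)
  qed
qed

end



lemma smooth_lip:
  fixes h :: "'a::euclidean_space \<Rightarrow> 'b::real_normed_vector"
  assumes "smooth_fun h"
  shows "continuous_on UNIV h \<and> (\<exists>L>0. \<exists>\<rho>>0. \<forall>z. norm (z - z0) \<le> \<rho> \<longrightarrow> norm (h z - h z0) \<le> L * norm (z - z0))"
proof -
  obtain D :: "'a list \<Rightarrow> 'a \<Rightarrow> 'b" where D0: "D [] = h" and
    Dc: "\<And>js. set js \<subseteq> Basis \<Longrightarrow> continuous_on UNIV (D js) \<and>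
        (\<forall>j\<in>Basis. \<forall>y. ((\<lambda>s. D js (y + s *\<^sub>R j)) has_vector_derivative D (j # js) y) (at 0))"
    using assms unfolding smooth_fun_def by metis
  have hc: "continuous_on UNIV h" using Dc[of "[]"] D0 by auto
  have der: "((\<lambda>s. h (y + s *\<^sub>R j)) has_vector_derivative D [j] (y + s0 *\<^sub>R j)) (at s0)"
    if j: "j \<in> Basis" for y j s0
  proof -
    have 1: "((\<lambda>s. h ((y + s0 *\<^sub>R j) + s *\<^sub>R j)) has_vector_derivative D [j] (y + s0 *\<^sub>R j)) (at ((\<lambda>s. s - s0) s0))"
      using Dc[of "[]"] j D0 by auto
    have 2: "((\<lambda>s. s - s0) has_vector_derivative 1) (at s0)"
      by (auto intro!: derivative_eq_intros)
    have "(((\<lambda>s. h ((y + s0 *\<^sub>R j) + s *\<^sub>R j)) \<circ> (\<lambda>s. s - s0)) has_vector_derivative (1::real) *\<^sub>R D [j] (y + s0 *\<^sub>R j)) (at s0)"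
      by (rule vector_diff_chain_at[OF 2 1])
    moreover have "((\<lambda>s. h ((y + s0 *\<^sub>R j) + s *\<^sub>R j)) \<circ> (\<lambda>s. s - s0)) = (\<lambda>s. h (y + s *\<^sub>R j))"
      by (auto simp: o_def algebra_simps)
    ultimately show ?thesis by simp
  qed
  define W where "W = (\<lambda>w. \<Sum>j\<in>Basis. norm (D [j] w))"
  have Wc: "continuous_on UNIV W" unfolding W_def
    using Dc by (auto intro!: continuous_intros)
  have "compact (W ` cball z0 1)"
    by (rule compact_continuous_image) (use Wc continuous_on_subset in auto)
  then obtain B where B: "\<And>w. w \<in> cball z0 1 \<Longrightarrow> norm (W w) \<le> B"
    using compact_imp_bounded bounded_iff by (metis image_eqI)
  have Bj: "norm (D [j] w) \<le> B" if "j \<in> Basis" "w \<in> cball z0 1" for j w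
  proof -
    have "norm (D [j] w) \<le> W w" unfolding W_def
      by (rule member_le_sum) (use that in auto)
    also have "\<dots> \<le> B" using B[OF that(2)] by auto
    finally show ?thesis .
  qed
  have B0: "B \<ge> 0" using B[of z0] by (auto intro: order_trans[OF norm_ge_zero])
  define \<rho> where "\<rho> = 1 / real DIM('a)"
  have \<rho>0: "\<rho> > 0" unfolding \<rho>_def by auto
  define P where "P = (\<lambda>S z. z0 + (\<Sum>b\<in>S. ((z - z0) \<bullet> b) *\<^sub>R b))"
  have Pn: "norm (P S z - z0) \<le> real (card S) * norm (z - z0)" if "S \<subseteq> Basis" for S z
  proof -
    have "norm (P S z - z0) \<le> (\<Sum>b\<in>S. norm (((z - z0) \<bullet> b) *\<^sub>R b))"
      unfolding P_def by (simp add: norm_sum del: norm_scaleR)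
    also have "\<dots> \<le> (\<Sum>b\<in>S. norm (z - z0))"
      apply (rule sum_mono) using that by (auto simp: Basis_le_norm)
    finally show ?thesis by simp
  qed
  have main: "norm (h (P S z) - h z0) \<le> real (card S) * (3 * B) * norm (z - z0)"
    if "S \<subseteq> Basis" "norm (z - z0) \<le> \<rho>" for S z
  proof -
    have "finite S" using that(1) finite_Basis finite_subset by blast
    then show ?thesis using that(1)
    proof (induction S)
      case empty
      then show ?case by (simp add: P_def)
    next
      case (insert b S)
      define y where "y = P S z"
      define c where "c = (z - z0) \<bullet> b"
      have Pi: "P (insert b S) z = y + c *\<^sub>R b"
        using insert by (simp add: P_def y_def c_def algebra_simps)
      have bB: "b \<in> Basis" using insert by auto
      have cardle: "real (card (insert b S)) \<le> real DIM('a)"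
        using insert card_mono[OF finite_Basis insert(4)] by simp
      have cn: "\<bar>c\<bar> \<le> norm (z - z0)" unfolding c_def using Basis_le_norm[OF bB] by auto
      have inball: "y + s *\<^sub>R b \<in> cball z0 1" if "\<bar>s\<bar> \<le> \<bar>c\<bar>" for s
      proof -
        have "norm (y + s *\<^sub>R b - z0) \<le> norm (y - z0) + \<bar>s\<bar>"
          using norm_triangle_ineq[of "y - z0" "s *\<^sub>R b"] bB by (simp add: algebra_simps)
        also have "\<dots> \<le> real (card S) * norm (z - z0) + norm (z - z0)"
          using Pn[of S z] insert that cn unfolding y_def by auto
        also have "\<dots> = real (card (insert b S)) * norm (z - z0)"
          using insert by (simp add: algebra_simps)
        also have "\<dots> \<le> real DIM('a) * \<rho>"
          using cardle \<open>norm (z - z0) \<le> \<rho>\<close> by (intro mult_mono) auto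
        also have "\<dots> = 1" unfolding \<rho>_def by simp
        finally show ?thesis by (simp add: dist_norm norm_minus_commute)
      qed
      have seg: "\<bar>s\<bar> \<le> \<bar>c\<bar>" if "s \<in> closed_segment 0 c" for s
        using that by (auto simp: closed_segment_eq_real_ivl split: if_splits)
      have mvt: "norm ((\<lambda>s. h (y + s *\<^sub>R b)) c - (\<lambda>s. h (y + s *\<^sub>R b)) 0 - (c - 0) *\<^sub>R D [b] (y + 0 *\<^sub>R b)) \<le> norm (c - 0) * (2 * B)"
      proof (rule vector_differentiable_bound_linearization[where S="closed_segment 0 c"])
        show "((\<lambda>s. h (y + s *\<^sub>R b)) has_vector_derivative D [b] (y + x *\<^sub>R b)) (at x within closed_segment 0 c)" for x
          using der[OF bB] has_vector_derivative_at_within by blast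
        show "norm (D [b] (y + x *\<^sub>R b) - D [b] (y + 0 *\<^sub>R b)) \<le> 2 * B" if "x \<in> closed_segment 0 c" for x
        proof -
          have "norm (D [b] (y + x *\<^sub>R b) - D [b] (y + 0 *\<^sub>R b)) \<le> norm (D [b] (y + x *\<^sub>R b)) + norm (D [b] (y + 0 *\<^sub>R b))"
            by (rule norm_triangle_ineq4)
          also have "\<dots> \<le> B + B" using Bj[OF bB inball] Bj[OF bB inball[of 0]] seg[OF that] by (intro add_mono) auto
          finally show ?thesis by simp
        qed
      qed auto
      have step: "norm (h (y + c *\<^sub>R b) - h y) \<le> 3 * B * norm (z - z0)"
      proof -
        have "norm (h (y + c *\<^sub>R b) - h y) \<le> norm (c *\<^sub>R D [b] y) + \<bar>c\<bar> * (2 * B)"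
          using mvt norm_triangle_ineq2[of "h (y + c *\<^sub>R b) - h y" "c *\<^sub>R D [b] y"] by simp
        also have "\<dots> \<le> \<bar>c\<bar> * B + \<bar>c\<bar> * (2 * B)"
          using Bj[OF bB inball[of 0]] by (simp add: mult.commute[of B] mult_left_mono)
        also have "\<dots> = 3 * B * \<bar>c\<bar>" by simp
        also have "\<dots> \<le> 3 * B * norm (z - z0)" using cn B0 by (intro mult_left_mono) auto
        finally show ?thesis .
      qed
      have "norm (h (P (insert b S) z) - h z0) \<le> norm (h (y + c *\<^sub>R b) - h y) + norm (h y - h z0)"
        unfolding Pi using norm_triangle_ineq[of "h (y + c *\<^sub>R b) - h y" "h y - h z0"] by simp
      also have "\<dots> \<le> 3 * B * norm (z - z0) + real (card S) * (3 * B) * norm (z - z0)"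
        using step insert unfolding y_def by (intro add_mono) auto
      also have "\<dots> = real (card (insert b S)) * (3 * B) * norm (z - z0)"
        using insert by (simp add: algebra_simps)
      finally show ?case .
    qed
  qed
  have PB: "P Basis z = z" for z
    unfolding P_def using euclidean_representation[of "z - z0"] by simp
  have "\<forall>z. norm (z - z0) \<le> \<rho> \<longrightarrow> norm (h z - h z0) \<le> (real DIM('a) * (3 * B) + 1) * norm (z - z0)"
  proof (intro allI impI)
    fix z assume "norm (z - z0) \<le> \<rho>"
    then have "norm (h z - h z0) \<le> real DIM('a) * (3 * B) * norm (z - z0)"
      using main[of Basis z] PB by simp
    also have "\<dots> \<le> (real DIM('a) * (3 * B) + 1) * norm (z - z0)"
      by (intro mult_right_mono) auto
    finally show "norm (h z - h z0) \<le> (real DIM('a) * (3 * B) + 1) * norm (z - z0)" .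
  qed
  moreover have "real DIM('a) * (3 * B) + 1 > 0" using B0 by (intro add_nonneg_pos) auto
  ultimately show ?thesis using hc \<rho>0 by blast
qed


lemma lin_bound:
  fixes f :: "real^'n \<Rightarrow> real^'m \<Rightarrow> real^'n"
    and g :: "real^'n \<Rightarrow> real^'m \<Rightarrow> real^'l^'n"
    and k :: "real^'l \<Rightarrow> real^'n \<Rightarrow> real^'m"
  assumes fs: "smooth_fun (\<lambda>(x, u). f x u)" and gs: "smooth_fun (\<lambda>(x, u). g x u)"
    and ks: "smooth_fun (\<lambda>(\<phi>, x). k \<phi> x)"
    and f0: "f 0 0 = 0" and g0: "g 0 0 = 0" and k0: "\<And>\<phi>. k \<phi> 0 = 0"
  shows "\<exists>L>0. \<exists>\<rho>>0. \<forall>y. norm y \<le> \<rho> \<longrightarrow> norm (f y (k \<phi> y) + g y (k \<phi> y) *v \<theta>) \<le> L * norm y"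
proof -
  obtain Lf \<rho>f where Lf: "Lf > 0" "\<rho>f > 0" "\<And>z. norm (z - (0, 0)) \<le> \<rho>f \<Longrightarrow> norm ((\<lambda>(x, u). f x u) z - (\<lambda>(x, u). f x u) (0, 0)) \<le> Lf * norm (z - (0, 0))"
    using smooth_lip[OF fs, of "(0, 0)"] by blast
  obtain Lg \<rho>g where Lg: "Lg > 0" "\<rho>g > 0" "\<And>z. norm (z - (0, 0)) \<le> \<rho>g \<Longrightarrow> norm ((\<lambda>(x, u). g x u) z - (\<lambda>(x, u). g x u) (0, 0)) \<le> Lg * norm (z - (0, 0))"
    using smooth_lip[OF gs, of "(0, 0)"] by blast
  obtain Lk \<rho>k where Lk: "Lk > 0" "\<rho>k > 0" "\<And>z. norm (z - (\<phi>, 0)) \<le> \<rho>k \<Longrightarrow> norm ((\<lambda>(\<phi>, x). k \<phi> x) z - (\<lambda>(\<phi>, x). k \<phi> x) (\<phi>, 0)) \<le> Lk * norm (z - (\<phi>, 0))"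
    using smooth_lip[OF ks, of "(\<phi>, 0)"] by blast
  obtain K where K: "K > 0" "\<And>M::real^'l^'n. norm (M *v \<theta>) \<le> norm M * K"
    using bounded_linear.pos_bounded[OF bl_mv[of \<theta>]] by blast
  define \<rho> where "\<rho> = min \<rho>k (min (\<rho>f / (1 + Lk)) (\<rho>g / (1 + Lk)))"
  have \<rho>0: "\<rho> > 0" unfolding \<rho>_def using Lf Lg Lk by auto
  define L where "L = (Lf + K * Lg) * (1 + Lk)"
  have L0: "L > 0" unfolding L_def using Lf Lg Lk K by (auto intro!: mult_pos_pos add_pos_pos)
  have "norm (f y (k \<phi> y) + g y (k \<phi> y) *v \<theta>) \<le> L * norm y" if y: "norm y \<le> \<rho>" for y
  proof -
    have yk: "norm y \<le> \<rho>k" using y unfolding \<rho>_def by linarith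
    have "norm (k \<phi> y) \<le> Lk * norm y"
      using Lk(3)[of "(\<phi>, y)"] yk k0 by simp
    then have kp: "norm (y, k \<phi> y) \<le> (1 + Lk) * norm y"
      using norm_Pair_le[of y "k \<phi> y"] by (simp add: algebra_simps)
    have "(1 + Lk) * norm y \<le> (1 + Lk) * (\<rho>f / (1 + Lk))"
      using y Lk unfolding \<rho>_def by (intro mult_left_mono) auto
    then have pf: "norm (y, k \<phi> y) \<le> \<rho>f" using kp Lk by simp
    have "(1 + Lk) * norm y \<le> (1 + Lk) * (\<rho>g / (1 + Lk))"
      using y Lk unfolding \<rho>_def by (intro mult_left_mono) auto
    then have pg: "norm (y, k \<phi> y) \<le> \<rho>g" using kp Lk by simp
    have nf: "norm (f y (k \<phi> y)) \<le> Lf * ((1 + Lk) * norm y)"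
    proof -
      have "norm (f y (k \<phi> y)) \<le> Lf * norm (y, k \<phi> y)" using Lf(3)[of "(y, k \<phi> y)"] pf f0 by simp
      also have "\<dots> \<le> Lf * ((1 + Lk) * norm y)" using kp Lf by (intro mult_left_mono) auto
      finally show ?thesis .
    qed
    have ng: "norm (g y (k \<phi> y)) \<le> Lg * ((1 + Lk) * norm y)"
    proof -
      have "norm (g y (k \<phi> y)) \<le> Lg * norm (y, k \<phi> y)" using Lg(3)[of "(y, k \<phi> y)"] pg g0 by simp
      also have "\<dots> \<le> Lg * ((1 + Lk) * norm y)" using kp Lg by (intro mult_left_mono) auto
      finally show ?thesis .
    qed
    have "norm (f y (k \<phi> y) + g y (k \<phi> y) *v \<theta>) \<le> norm (f y (k \<phi> y)) + norm (g y (k \<phi> y) *v \<theta>)"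
      by (rule norm_triangle_ineq)
    also have "\<dots> \<le> Lf * ((1 + Lk) * norm y) + norm (g y (k \<phi> y)) * K"
      using nf K(2)[of "g y (k \<phi> y)"] by (rule add_mono)
    also have "\<dots> \<le> Lf * ((1 + Lk) * norm y) + (Lg * ((1 + Lk) * norm y)) * K"
      using ng K by (intro add_left_mono mult_right_mono) auto
    also have "\<dots> = L * norm y" unfolding L_def by (simp add: algebra_simps)
    finally show ?thesis .
  qed
  then show ?thesis using L0 \<rho>0 by blast
qed




lemma core:
  fixes f :: "real^'n \<Rightarrow> real^'m \<Rightarrow> real^'n"
    and g :: "real^'n \<Rightarrow> real^'m \<Rightarrow> real^'l^'n"
    and k :: "real^'l \<Rightarrow> real^'n \<Rightarrow> real^'m"
    and V Q :: "real^'l \<Rightarrow> real^'n \<Rightarrow> real"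
    and M \<omega> R :: "real^'l \<Rightarrow> real"
    and a :: "real^'n \<Rightarrow> real"
    and T :: real and N Nt :: nat
  assumes fc: "continuous_on UNIV (\<lambda>(x, u). f x u)"
    and gc: "continuous_on UNIV (\<lambda>(x, u). g x u)"
    and kc: "continuous_on UNIV (\<lambda>(\<phi>, x). k \<phi> x)"
    and lin: "\<And>\<phi>. \<exists>L>0. \<exists>\<rho>>0. \<forall>y. norm y \<le> \<rho> \<longrightarrow> norm (f y (k \<phi> y) + g y (k \<phi> y) *v \<theta>) \<le> L * norm y"
    and V_cont: "\<And>\<phi>. continuous_on UNIV (V \<phi>)"
    and H3: "\<And>(\<tau> :: nat \<Rightarrow> real) (\<theta> :: real^'l) (d :: nat \<Rightarrow> real^'l) (x :: real \<Rightarrow> real^'n).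
               \<tau> 0 = 0 \<Longrightarrow> (\<forall>i<N. \<tau> i < \<tau> (Suc i)) \<Longrightarrow> (\<forall>i\<le>N. d i \<noteq> 0) \<Longrightarrow>
               continuous_on {0..\<tau> N} x \<Longrightarrow>
               (\<forall>i<N. \<forall>t\<in>{\<tau> i..<\<tau> (Suc i)}.
                  (x has_vector_derivative
                     (f (x t) (k (\<theta> + d i) (x t)) + g (x t) (k (\<theta> + d i) (x t)) *v \<theta>))
                     (at t within {t..})) \<Longrightarrow>
               (\<forall>i<N. \<forall>t\<in>{\<tau> i<..<\<tau> (Suc i)}.
                  (x has_vector_derivative
                     (f (x t) (k (\<theta> + d i) (x t)) + g (x t) (k (\<theta> + d i) (x t)) *v \<theta>))
                     (at t)) \<Longrightarrow>
               (\<forall>i<N. \<forall>j\<le>i. \<forall>t\<in>{\<tau> j..\<tau> (Suc j)}.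
                  g (x t) (k (\<theta> + d j) (x t)) *v d (Suc i) = 0) \<Longrightarrow>
               \<forall>t\<in>{0..\<tau> N}. x t = 0"
    and exp_stab: "M \<theta> > 0 \<and> \<omega> \<theta> > 0 \<and> R \<theta> > 0"
    and exp_stab_bound: "\<And>x t. ode_sol (\<lambda>x. f x (k \<theta> x) + g x (k \<theta> x) *v \<theta>) x \<Longrightarrow>
               norm (x 0) \<le> R \<theta> \<Longrightarrow> t \<ge> 0 \<Longrightarrow>
               norm (x t) \<le> M \<theta> * exp (- \<omega> \<theta> * t) * norm (x 0)"
    and Rb: "Rb > 0" and Ka: "0 < Ka" "Ka < Kb"
    and quadT: "\<forall>\<phi>\<in>cball \<theta> (2 ^ N * norm (thi - \<theta>)). \<forall>x. norm x \<le> Rb \<longrightarrow>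
                    Ka * (norm x)\<^sup>2 \<le> V \<phi> x \<and> V \<phi> x \<le> Q \<phi> x \<and> Q \<phi> x \<le> Kb * (norm x)\<^sup>2"
    and \<delta>: "\<delta> > 0" and Ca: "Ca \<ge> 0"
    and aq: "\<And>y. y \<noteq> 0 \<Longrightarrow> norm y \<le> \<delta> \<Longrightarrow> a y \<le> Ca * (norm y)\<^sup>2"
    and a_pd: "pos_def a"
    and T_pos: "T > 0" and Nt_gt: "Nt > N"
    and cdef: "c = sqrt ((Kb + Ca) / Ka)"
    and x0s: "norm xi \<le> min (min \<delta> (Rb / (2 * c))) (R \<theta>) / c ^ N"
    and hs: "hybrid_sol f g k V Q a T Nt \<theta> xi thi x \<theta>h \<tau>"
  shows "\<forall>t\<ge>0. norm (x t) \<le> c ^ N * (M \<theta> + 1) * exp (\<omega> \<theta> * real N * T) * exp (- \<omega> \<theta> * t) * norm xi"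
proof -
  interpret h: hyb f g k V Q a T Nt \<theta> xi thi x \<theta>h \<tau>
    by unfold_locales (use hs fc gc kc T_pos Nt_gt in auto)
  have linF: "\<And>\<phi>. \<exists>L>0. \<exists>\<rho>>0. \<forall>y. norm y \<le> \<rho> \<longrightarrow> norm (h.F \<phi> y) \<le> L * norm y"
    unfolding h.F_def by (rule lin)
  have c2: "c\<^sup>2 = (Kb + Ca) / Ka" unfolding cdef using Ka Ca by simp
  have c1: "c \<ge> 1" unfolding cdef using Ka Ca by simp
  have c0: "c > 0" using c1 by simp
  define r1 where "r1 = min \<delta> (Rb / (2 * c))"
  have cN: "c ^ N > 0" using c0 by simp
  have x0r: "norm xi * c ^ N \<le> min r1 (R \<theta>)"
    using x0s cN unfolding r1_def by (simp add: field_simps)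
  define E where "E = exp (\<omega> \<theta> * real N * T)"
  have E1: "E \<ge> 1" unfolding E_def using exp_stab T_pos by simp
  show ?thesis
  proof (cases "xi = 0")
    case True
    have "x t = 0" if "t \<ge> 0" for t
      using h.zero_forever[OF linF, of 0 t] h.tau0 h.x00 True that by simp
    then show ?thesis using True by simp
  next
    case False
    have ex: "\<exists>j\<le>N. \<theta>h (\<tau> j) = \<theta>"
    proof (rule ccontr)
      assume "\<not> (\<exists>j\<le>N. \<theta>h (\<tau> j) = \<theta>)"
      then have d: "\<forall>i\<le>N. \<theta>h (\<tau> i) - \<theta> \<noteq> 0" by auto
      have "\<forall>t\<in>{0..\<tau> N}. x t = 0"
        using H3[of \<tau> "\<lambda>i. \<theta>h (\<tau> i) - \<theta>" x \<theta>, OF h.tau0 _ d] h.H3_prereq[OF Nt_gt] h.inc by blast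
      then have "x 0 = 0" using h.tau_nonneg by auto
      then show False using False h.x00 by simp
    qed
    define j0 where "j0 = (LEAST j. \<theta>h (\<tau> j) = \<theta>)"
    obtain jj where jj: "jj \<le> N" "\<theta>h (\<tau> jj) = \<theta>" using ex by blast
    have j0: "\<theta>h (\<tau> j0) = \<theta>" unfolding j0_def by (rule LeastI[of _ jj]) (rule jj(2))
    have "j0 \<le> jj" unfolding j0_def by (rule Least_le) (rule jj(2))
    then have j0N: "j0 \<le> N" using jj(1) by simp
    have phase1: "n \<le> j0 \<longrightarrow> (\<forall>t\<in>{0..\<tau> n}. norm (x t) \<le> c ^ n * norm xi)" for n
    proof (induction n)
      case 0 then show ?case using h.tau0 h.x00 by simp
    next
      case (Suc n)
      show ?case
      proof (intro impI ballI)
        fix t assume nj: "Suc n \<le> j0" and t: "t \<in> {0..\<tau> (Suc n)}"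
        have IH: "\<forall>t\<in>{0..\<tau> n}. norm (x t) \<le> c ^ n * norm xi" using Suc nj by simp
        have cn: "c ^ n \<le> c ^ Suc n" using c1 by simp
        show "norm (x t) \<le> c ^ Suc n * norm xi"
        proof (cases "t \<le> \<tau> n")
          case True
          then have "norm (x t) \<le> c ^ n * norm xi" using IH t by auto
          also have "\<dots> \<le> c ^ Suc n * norm xi" using cn by (intro mult_right_mono) auto
          finally show ?thesis .
        next
          case False
          then have tn: "t \<in> {\<tau> n..\<tau> (Suc n)}" using t by auto
          have xn: "norm (x (\<tau> n)) \<le> c ^ n * norm xi" using IH h.tau_nonneg by auto
          have "c ^ n * norm xi \<le> c ^ N * norm xi"
            using c1 nj j0N by (intro mult_right_mono power_increasing) auto
          also have "\<dots> \<le> r1" using x0r by (simp add: mult.commute)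
          finally have xr1: "norm (x (\<tau> n)) \<le> r1" using xn by linarith
          show ?thesis
          proof (cases "x (\<tau> n) = 0")
            case True
            then have "x t = 0" using h.zero_forever[OF linF, of n t] tn by simp
            then show ?thesis using c0 by simp
          next
            case xnz: False
            define \<phi> where "\<phi> = \<theta>h (\<tau> n)"
            have "norm (\<phi> - \<theta>) \<le> 2 ^ n * norm (thi - \<theta>)" unfolding \<phi>_def by (rule h.th_bound)
            also have "\<dots> \<le> 2 ^ N * norm (thi - \<theta>)"
              using nj j0N by (intro mult_right_mono power_increasing) auto
            finally have \<phi>in: "\<phi> \<in> cball \<theta> (2 ^ N * norm (thi - \<theta>))"
              by (simp add: dist_norm norm_minus_commute)
            have qd: "\<And>y. norm y \<le> Rb \<Longrightarrow> Ka * (norm y)\<^sup>2 \<le> V \<phi> y \<and> V \<phi> y \<le> Q \<phi> y \<and> Q \<phi> y \<le> Kb * (norm y)\<^sup>2"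
              using quadT \<phi>in by blast
            have r1Rb: "r1 \<le> Rb / 2" unfolding r1_def using c1 Rb
              by (smt (verit, best) divide_left_mono mult_pos_pos)
            have xRb: "norm (x (\<tau> n)) \<le> Rb" using xr1 r1Rb Rb by linarith
            have xdel: "norm (x (\<tau> n)) \<le> \<delta>" using xr1 unfolding r1_def by linarith
            have apos: "a (x (\<tau> n)) > 0" using a_pd xnz unfolding pos_def_def by blast
            have aqn: "a (x (\<tau> n)) \<le> Ca * (norm (x (\<tau> n)))\<^sup>2" using aq[OF xnz xdel] .
            define Cb where "Cb = (Kb + Ca) * (norm (x (\<tau> n)))\<^sup>2"
            have VQn: "V \<phi> (x (\<tau> n)) \<le> Q \<phi> (x (\<tau> n))" using qd[OF xRb] by blast
            have Vb: "V \<phi> (x s) \<le> Cb" if s: "s \<in> {\<tau> n..\<tau> (Suc n)}" for s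
            proof -
              have "V \<phi> (x s) \<le> Q \<phi> (x (\<tau> n)) + a (x (\<tau> n))"
                using h.trig_bound[OF xnz VQn[unfolded \<phi>_def] apos V_cont s] unfolding \<phi>_def .
              also have "\<dots> \<le> Kb * (norm (x (\<tau> n)))\<^sup>2 + Ca * (norm (x (\<tau> n)))\<^sup>2"
                using qd[OF xRb] aqn by (intro add_mono) auto
              finally show ?thesis unfolding Cb_def by (simp add: algebra_simps)
            qed
            have Cb_eq: "Cb = Ka * (c * norm (x (\<tau> n)))\<^sup>2"
              unfolding Cb_def using c2 Ka by (simp add: power_mult_distrib)
            have cx: "c * norm (x (\<tau> n)) \<le> Rb / 2"
            proof -
              have "c * norm (x (\<tau> n)) \<le> c * (Rb / (2 * c))"
                using xr1 c0 unfolding r1_def by (intro mult_left_mono) auto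
              then show ?thesis using c0 by simp
            qed
            have CbK: "Cb < Ka * Rb\<^sup>2"
            proof -
              have "(c * norm (x (\<tau> n)))\<^sup>2 \<le> (Rb / 2)\<^sup>2"
                using cx c0 by (intro power_mono) auto
              also have "\<dots> < Rb\<^sup>2" using Rb by (simp add: power_divide)
              finally show ?thesis unfolding Cb_eq using Ka by simp
            qed
            have xlt: "norm (x (\<tau> n)) < Rb" using xRb r1Rb xr1 Rb by linarith
            have tRb: "norm (x t) < Rb"
              by (rule h.confine[where W="V \<phi>", OF Ka(1) Rb _ xlt Vb CbK tn]) (use qd in auto)
            have "Ka * (norm (x t))\<^sup>2 \<le> V \<phi> (x t)" using qd[of "x t"] tRb by simp
            also have "\<dots> \<le> Cb" by (rule Vb[OF tn])
            finally have "Ka * (norm (x t))\<^sup>2 \<le> Ka * (c * norm (x (\<tau> n)))\<^sup>2" unfolding Cb_eq .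
            then have "(norm (x t))\<^sup>2 \<le> (c * norm (x (\<tau> n)))\<^sup>2" using Ka by simp
            then have "norm (x t) \<le> c * norm (x (\<tau> n))"
              using c0 by (meson norm_ge_zero power2_le_imp_le zero_le_mult_iff less_imp_le)
            also have "\<dots> \<le> c * (c ^ n * norm xi)" using xn c0 by (intro mult_left_mono) auto
            finally show ?thesis by simp
          qed
        qed
      qed
    qed
    have ph1: "norm (x t) \<le> c ^ N * norm xi" if "t \<in> {0..\<tau> j0}" for t
    proof -
      have "norm (x t) \<le> c ^ j0 * norm xi" using phase1[of j0] that by simp
      also have "\<dots> \<le> c ^ N * norm xi" using c1 j0N by (intro mult_right_mono power_increasing) auto
      finally show ?thesis .
    qed
    have tj0: "\<tau> j0 \<le> real N * T"
      using h.tau_bound[of j0] j0N T_pos by (smt (verit) mult_right_mono of_nat_mono)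
    have xj0: "norm (x (\<tau> j0)) \<le> R \<theta>"
    proof -
      have "norm (x (\<tau> j0)) \<le> c ^ N * norm xi" using ph1 h.tau_nonneg by auto
      also have "\<dots> \<le> R \<theta>" using x0r by (simp add: mult.commute)
      finally show ?thesis .
    qed
    have Mt0: "c ^ N * norm xi \<le> c ^ N * (M \<theta> + 1) * E * exp (- \<omega> \<theta> * t) * norm xi" if "0 \<le> t" "t \<le> real N * T" for t
    proof -
      have "1 \<le> E * exp (- \<omega> \<theta> * t)"
      proof -
        have "E * exp (- \<omega> \<theta> * t) = exp (\<omega> \<theta> * (real N * T - t))"
          unfolding E_def by (simp add: exp_add[symmetric] algebra_simps)
        also have "\<dots> \<ge> 1" using that exp_stab by simp
        finally show ?thesis .
      qed
      then have "1 \<le> (M \<theta> + 1) * (E * exp (- \<omega> \<theta> * t))"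
        using exp_stab by (smt (verit, best) mult_le_cancel_right1 mult_nonneg_nonneg)
      then have "c ^ N * norm xi * 1 \<le> c ^ N * norm xi * ((M \<theta> + 1) * (E * exp (- \<omega> \<theta> * t)))"
        using cN by (intro mult_left_mono) auto
      then show ?thesis by (simp add: algebra_simps)
    qed
    show ?thesis unfolding E_def[symmetric]
    proof (intro allI impI)
      fix t :: real assume t: "0 \<le> t"
      show "norm (x t) \<le> c ^ N * (M \<theta> + 1) * E * exp (- \<omega> \<theta> * t) * norm xi"
      proof (cases "t \<le> \<tau> j0")
        case True
        then show ?thesis using ph1[of t] t Mt0[of t] tj0 by auto
      next
        case False
        define s where "s = t - \<tau> j0"
        have s0: "0 \<le> s" using False unfolding s_def by simp
        have ode: "ode_sol (\<lambda>y. f y (k \<theta> y) + g y (k \<theta> y) *v \<theta>) (\<lambda>t. x (\<tau> j0 + t))"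
          by (rule h.exp_phase[OF j0])
        have "norm (x (\<tau> j0 + s)) \<le> M \<theta> * exp (- \<omega> \<theta> * s) * norm (x (\<tau> j0 + 0))"
          using exp_stab_bound[OF ode _ s0] xj0 by simp
        also have "\<dots> \<le> M \<theta> * exp (- \<omega> \<theta> * s) * (c ^ N * norm xi)"
          using ph1[of "\<tau> j0"] h.tau_nonneg exp_stab by (intro mult_left_mono) auto
        also have "\<dots> = M \<theta> * c ^ N * exp (\<omega> \<theta> * \<tau> j0) * exp (- \<omega> \<theta> * t) * norm xi"
          unfolding s_def by (simp add: exp_add[symmetric] algebra_simps)
        also have "\<dots> \<le> (M \<theta> + 1) * c ^ N * E * exp (- \<omega> \<theta> * t) * norm xi"
        proof -
          have "exp (\<omega> \<theta> * \<tau> j0) \<le> E" unfolding E_def using tj0 exp_stab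
            by (simp add: mult.assoc)
          moreover have "M \<theta> \<le> M \<theta> + 1" by simp
          ultimately show ?thesis using exp_stab cN
            by (intro mult_right_mono mult_mono) auto
        qed
        finally show ?thesis using s_def by (simp add: algebra_simps)
      qed
    qed
  qed
qed


theorem theorem3p2:
  fixes f :: "real^'n \<Rightarrow> real^'m \<Rightarrow> real^'n"
    and g :: "real^'n \<Rightarrow> real^'m \<Rightarrow> real^'l^'n"
    and k :: "real^'l \<Rightarrow> real^'n \<Rightarrow> real^'m"
    and V Q :: "real^'l \<Rightarrow> real^'n \<Rightarrow> real"
    and M \<omega> R :: "real^'l \<Rightarrow> real"
    and a :: "real^'n \<Rightarrow> real"
    and T :: real and N Nt :: nat
  assumes f_smooth: "smooth_fun (\<lambda>(x, u). f x u)"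
    and g_smooth: "smooth_fun (\<lambda>(x, u). g x u)"
    and f0: "f 0 0 = 0" and g0: "g 0 0 = 0"
    and k_smooth: "smooth_fun (\<lambda>(\<phi>, x). k \<phi> x)"
    and k0: "\<And>\<phi>. k \<phi> 0 = 0"
    and V_nonneg: "\<And>\<phi> x. V \<phi> x \<ge> 0" and Q_nonneg: "\<And>\<phi> x. Q \<phi> x \<ge> 0"
    and V_cont: "\<And>\<phi>. continuous_on UNIV (V \<phi>)"
    and Q_cont: "\<And>\<phi>. continuous_on UNIV (Q \<phi>)"
    and V_pd: "\<And>\<phi>. pos_def (V \<phi>)" and Q_pd: "\<And>\<phi>. pos_def (Q \<phi>)"
    and V_ru: "\<And>\<phi>. radially_unbounded (V \<phi>)"
    and Q_ru: "\<And>\<phi>. radially_unbounded (Q \<phi>)"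
    and V_joint: "continuous_on UNIV (\<lambda>(\<phi>, x). V \<phi> x)"
    and Q_joint: "continuous_on UNIV (\<lambda>(\<phi>, x). Q \<phi> x)"
    and H1_gas: "\<And>\<phi>. GAS (\<lambda>x. f x (k \<phi> x) + g x (k \<phi> x) *v \<phi>)"
    and H1_bound: "\<And>\<phi> x t. ode_sol (\<lambda>x. f x (k \<phi> x) + g x (k \<phi> x) *v \<phi>) x \<Longrightarrow> t \<ge> 0
                     \<Longrightarrow> V \<phi> (x t) \<le> Q \<phi> (x 0)"
    and H2: "\<And>\<Theta> Mb. compact \<Theta> \<Longrightarrow> \<Theta> \<noteq> {} \<Longrightarrow> Mb \<ge> 0 \<Longrightarrow>
               \<exists>Rb>0. \<forall>\<phi>\<in>\<Theta>. \<forall>x. V \<phi> x \<le> Mb \<longrightarrow> norm x \<le> Rb"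
    and N_pos: "N > 0"
    and H3: "\<And>(\<tau> :: nat \<Rightarrow> real) (\<theta> :: real^'l) (d :: nat \<Rightarrow> real^'l) (x :: real \<Rightarrow> real^'n).
               \<tau> 0 = 0 \<Longrightarrow> (\<forall>i<N. \<tau> i < \<tau> (Suc i)) \<Longrightarrow> (\<forall>i\<le>N. d i \<noteq> 0) \<Longrightarrow>
               continuous_on {0..\<tau> N} x \<Longrightarrow>
               (\<forall>i<N. \<forall>t\<in>{\<tau> i..<\<tau> (Suc i)}.
                  (x has_vector_derivative
                     (f (x t) (k (\<theta> + d i) (x t)) + g (x t) (k (\<theta> + d i) (x t)) *v \<theta>))
                     (at t within {t..})) \<Longrightarrow>
               (\<forall>i<N. \<forall>t\<in>{\<tau> i<..<\<tau> (Suc i)}.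
                  (x has_vector_derivative
                     (f (x t) (k (\<theta> + d i) (x t)) + g (x t) (k (\<theta> + d i) (x t)) *v \<theta>))
                     (at t)) \<Longrightarrow>
               (\<forall>i<N. \<forall>j\<le>i. \<forall>t\<in>{\<tau> j..\<tau> (Suc j)}.
                  g (x t) (k (\<theta> + d j) (x t)) *v d (Suc i) = 0) \<Longrightarrow>
               \<forall>t\<in>{0..\<tau> N}. x t = 0"
    and exp_stab: "\<And>\<phi>. M \<phi> > 0 \<and> \<omega> \<phi> > 0 \<and> R \<phi> > 0"
    and exp_stab_bound: "\<And>\<phi> x t. ode_sol (\<lambda>x. f x (k \<phi> x) + g x (k \<phi> x) *v \<phi>) x \<Longrightarrow>
               norm (x 0) \<le> R \<phi> \<Longrightarrow> t \<ge> 0 \<Longrightarrow>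
               norm (x t) \<le> M \<phi> * exp (- \<omega> \<phi> * t) * norm (x 0)"
    and quad: "\<And>\<Theta>. compact \<Theta> \<Longrightarrow> \<Theta> \<noteq> {} \<Longrightarrow>
               \<exists>Rb>0. \<exists>K1 K2. 0 < K1 \<and> K1 < K2 \<and>
                 (\<forall>\<phi>\<in>\<Theta>. \<forall>x. norm x \<le> Rb \<longrightarrow>
                    K1 * (norm x)\<^sup>2 \<le> V \<phi> x \<and> V \<phi> x \<le> Q \<phi> x \<and> Q \<phi> x \<le> K2 * (norm x)\<^sup>2)"
    and T_pos: "T > 0"
    and a_cont: "continuous_on UNIV a" and a_nonneg: "\<And>x. a x \<ge> 0" and a_pd: "pos_def a"
    and a_quad: "\<exists>\<delta>>0. \<exists>C. \<forall>x. x \<noteq> 0 \<and> norm x \<le> \<delta> \<longrightarrow> a x / (norm x)\<^sup>2 \<le> C"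
    and Nt_gt: "Nt > N"
  shows "\<exists>Mt Rt :: real^'l \<Rightarrow> real^'l \<Rightarrow> real.
           (\<forall>\<theta> \<theta>h0. Mt \<theta> \<theta>h0 > 0 \<and> Rt \<theta> \<theta>h0 > 0) \<and>
           (\<forall>\<theta> \<theta>h0 x0 x \<theta>h \<tau>. norm x0 \<le> Rt \<theta> \<theta>h0 \<longrightarrow>
              hybrid_sol f g k V Q a T Nt \<theta> x0 \<theta>h0 x \<theta>h \<tau> \<longrightarrow>
              (\<forall>t\<ge>0. norm (x t) \<le> Mt \<theta> \<theta>h0 * exp (- \<omega> \<theta> * t) * norm x0))"
  proof -
  have fc: "continuous_on UNIV (\<lambda>(x, u). f x u)" using smooth_lip[OF f_smooth] by blast
  have gc: "continuous_on UNIV (\<lambda>(x, u). g x u)" using smooth_lip[OF g_smooth] by blast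
  have kc: "continuous_on UNIV (\<lambda>(\<phi>, x). k \<phi> x)" using smooth_lip[OF k_smooth] by blast
  have per: "\<exists>m r. m > 0 \<and> r > 0 \<and> (\<forall>x0 x \<theta>h \<tau>. norm x0 \<le> r \<longrightarrow>
              hybrid_sol f g k V Q a T Nt \<theta> x0 \<theta>h0 x \<theta>h \<tau> \<longrightarrow>
              (\<forall>t\<ge>0. norm (x t) \<le> m * exp (- \<omega> \<theta> * t) * norm x0))" for \<theta> \<theta>h0
  proof -
    define \<Theta> where "\<Theta> = cball \<theta> (2 ^ N * norm (\<theta>h0 - \<theta>))"
    have "compact \<Theta>" unfolding \<Theta>_def by auto
    have "\<theta> \<in> \<Theta>" unfolding \<Theta>_def by simp
    then have "\<Theta> \<noteq> {}" by blast
    note this \<open>compact \<Theta>\<close>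
    from quad[OF \<open>compact \<Theta>\<close> \<open>\<Theta> \<noteq> {}\<close>] obtain Rb K1 K2 where Rb: "Rb > 0" and K: "0 < K1" "K1 < K2"
      and qT: "\<forall>\<phi>\<in>\<Theta>. \<forall>x. norm x \<le> Rb \<longrightarrow>
                    K1 * (norm x)\<^sup>2 \<le> V \<phi> x \<and> V \<phi> x \<le> Q \<phi> x \<and> Q \<phi> x \<le> K2 * (norm x)\<^sup>2"
      by blast
    obtain \<delta> C where \<delta>: "\<delta> > 0" and aC: "\<forall>x. x \<noteq> 0 \<and> norm x \<le> \<delta> \<longrightarrow> a x / (norm x)\<^sup>2 \<le> C"
      using a_quad by blast
    define Ca where "Ca = max C 0"
    have Ca: "Ca \<ge> 0" unfolding Ca_def by simp
    have aq: "a y \<le> Ca * (norm y)\<^sup>2" if "y \<noteq> 0" "norm y \<le> \<delta>" for y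
    proof -
      have n0: "(norm y)\<^sup>2 > 0" using that by simp
      have "a y / (norm y)\<^sup>2 \<le> Ca" using aC that unfolding Ca_def by force
      then show ?thesis using n0 by (simp add: divide_le_eq)
    qed
    define c where "c = sqrt ((K2 + Ca) / K1)"
    have c1: "c \<ge> 1" unfolding c_def using K Ca by simp
    define m where "m = c ^ N * (M \<theta> + 1) * exp (\<omega> \<theta> * real N * T)"
    define r where "r = min (min \<delta> (Rb / (2 * c))) (R \<theta>) / c ^ N"
    have m0: "m > 0" unfolding m_def using c1 exp_stab[of \<theta>]
      by (intro mult_pos_pos) auto
    have r0: "r > 0" unfolding r_def using c1 exp_stab[of \<theta>] \<delta> Rb by auto
    have "\<forall>x0 x \<theta>h \<tau>. norm x0 \<le> r \<longrightarrow>
              hybrid_sol f g k V Q a T Nt \<theta> x0 \<theta>h0 x \<theta>h \<tau> \<longrightarrow>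
              (\<forall>t\<ge>0. norm (x t) \<le> m * exp (- \<omega> \<theta> * t) * norm x0)"
    proof ((rule allI)+, (rule impI)+)
      fix x0 x \<theta>h \<tau>
      assume x0r: "norm x0 \<le> r" and hs: "hybrid_sol f g k V Q a T Nt \<theta> x0 \<theta>h0 x \<theta>h \<tau>"
      have "\<forall>t\<ge>0. norm (x t) \<le> c ^ N * (M \<theta> + 1) * exp (\<omega> \<theta> * real N * T) * exp (- \<omega> \<theta> * t) * norm x0"
      proof (rule core[where f=f and g=g and k=k and V=V and Q=Q and a=a and T=T and N=N and Nt=Nt
                     and \<theta>=\<theta> and thi=\<theta>h0 and M=M and \<omega>=\<omega> and R=R and Rb=Rb and Ka=K1 and Kb=K2
                     and \<delta>=\<delta> and Ca=Ca and c=c and xi=x0 and x=x and \<theta>h=\<theta>h and \<tau>=\<tau>])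
        show "\<And>\<phi>. \<exists>L>0. \<exists>\<rho>>0. \<forall>y. norm y \<le> \<rho> \<longrightarrow> norm (f y (k \<phi> y) + g y (k \<phi> y) *v \<theta>) \<le> L * norm y"
          by (rule lin_bound[OF f_smooth g_smooth k_smooth f0 g0 k0])
      qed (use fc gc kc V_cont H3 exp_stab exp_stab_bound Rb K \<delta> Ca aq a_pd T_pos Nt_gt c_def hs x0r[unfolded r_def] qT[unfolded \<Theta>_def] in auto)
      then show "\<forall>t\<ge>0. norm (x t) \<le> m * exp (- \<omega> \<theta> * t) * norm x0" unfolding m_def .
    qed
    then show ?thesis using m0 r0 by blast
  qed
  have "\<forall>p. \<exists>mr. fst mr > 0 \<and> snd mr > 0 \<and> (\<forall>x0 x \<theta>h \<tau>. norm x0 \<le> snd mr \<longrightarrow>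
              hybrid_sol f g k V Q a T Nt (fst p) x0 (snd p) x \<theta>h \<tau> \<longrightarrow>
              (\<forall>t\<ge>0. norm (x t) \<le> fst mr * exp (- \<omega> (fst p) * t) * norm x0))"
  proof
    fix p :: "(real^'l) \<times> (real^'l)"
    obtain m r where "m > 0 \<and> r > 0 \<and> (\<forall>x0 x \<theta>h \<tau>. norm x0 \<le> r \<longrightarrow>
              hybrid_sol f g k V Q a T Nt (fst p) x0 (snd p) x \<theta>h \<tau> \<longrightarrow>
              (\<forall>t\<ge>0. norm (x t) \<le> m * exp (- \<omega> (fst p) * t) * norm x0))"
      using per[of "fst p" "snd p"] by blast
    then show "\<exists>mr. fst mr > 0 \<and> snd mr > 0 \<and> (\<forall>x0 x \<theta>h \<tau>. norm x0 \<le> snd mr \<longrightarrow>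
              hybrid_sol f g k V Q a T Nt (fst p) x0 (snd p) x \<theta>h \<tau> \<longrightarrow>
              (\<forall>t\<ge>0. norm (x t) \<le> fst mr * exp (- \<omega> (fst p) * t) * norm x0))"
      by (intro exI[of _ "(m, r)"]) simp
  qed
  then obtain Fc where Fc: "\<forall>p. fst (Fc p) > 0 \<and> snd (Fc p) > 0 \<and> (\<forall>x0 x \<theta>h \<tau>. norm x0 \<le> snd (Fc p) \<longrightarrow>
              hybrid_sol f g k V Q a T Nt (fst p) x0 (snd p) x \<theta>h \<tau> \<longrightarrow>
              (\<forall>t\<ge>0. norm (x t) \<le> fst (Fc p) * exp (- \<omega> (fst p) * t) * norm x0))"
    by (metis choice)
  show ?thesis
    by (rule exI[of _ "\<lambda>\<theta> \<theta>h0. fst (Fc (\<theta>, \<theta>h0))"], rule exI[of _ "\<lambda>\<theta> \<theta>h0. snd (Fc (\<theta>, \<theta>h0))"])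
       (use Fc in \<open>metis fst_conv snd_conv\<close>)
qed

end
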